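(* For each $\lambda\in\Lambda$, $(Q_\lambda,B)$ is a polynomial-like map of degree $p+1$: $Q_\lambda(B)$ is a ball strictly containing $B$, and for every $w\in Q_\lambda(B)$ the equation $Q_\lambda(z)=w$ has exactly $p+1$ solutions in $B$, counted with multiplicity.
   Context: Let $p$ be a prime, $\mathbb C_p$ with $p$-adic absolute value, $|p|=1/p$. $\Lambda=\{\lambda\in\mathbb C_p:|\lambda-1|<1\}$, $P_\lambda(z)=\frac{\lambda}{p}z^p+\left(1-\frac{\lambda}{p}\right)z^{p+1}$, $\rho=p^{-1/(p-1)}$. Fix $\hat r\in|\mathbb C_p^*|$, $\hat r>1$, $B=\{z:|z|\le\hat r\}$; $\mathcal H(B)$ is the ring of power series $\sum a_iz^i$ convergent on $B$ with norm $\|f\|_B=\sup_i|a_i|\hat r^{\,i}$. Fix $Q\in\mathcal H(B)$ with $\|Q\|_B<\rho$, $Q^*_\lambda=P_\lambda+Q$, and let $h(\lambda)$ be the unique fixed point of $Q^*_\lambda$ in $\{z:|z-1|\le|Q(1)|/p\}$. Define $Q_\lambda(z)=P_\lambda(z+h(\lambda)-1)+Q(z+h(\lambda)-1)+1-h(\lambda)$ for $z\in B$. *)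

theory Defs
  imports "HOL-Analysis.Analysis" "HOL-Computational_Algebra.Polynomial"
begin

text \<open>A model of C_p: a field of characteristic 0 together with an absolute value av
  which is non-archimedean, complete, algebraically closed, with av p = 1/p, and in which
  the algebraic numbers are dense.  These properties characterise C_p up to isometric
  isomorphism (it is the completion of an algebraic closure of Q_p).\<close>

definition is_Cp :: "nat \<Rightarrow> ('a::field_char_0 \<Rightarrow> real) \<Rightarrow> bool" where
  "is_Cp p av \<longleftrightarrow>
     prime p \<and>
     (\<forall>x. av x \<ge> 0) \<and> (\<forall>x. av x = 0 \<longleftrightarrow> x = 0) \<and>
     (\<forall>x y. av (x * y) = av x * av y) \<and>
     (\<forall>x y. av (x + y) \<le> max (av x) (av y)) \<and>
     av (of_nat p) = 1 / real p \<and>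
     (\<forall>s :: nat \<Rightarrow> 'a. (\<forall>e>0. \<exists>N. \<forall>m\<ge>N. \<forall>n\<ge>N. av (s m - s n) < e) \<longrightarrow>
         (\<exists>L. (\<lambda>n. av (s n - L)) \<longlonglongrightarrow> 0)) \<and>
     (\<forall>q :: 'a poly. degree q > 0 \<longrightarrow> (\<exists>z. poly q z = 0)) \<and>
     (\<forall>x e. e > 0 \<longrightarrow> (\<exists>y. (\<exists>q :: rat poly. q \<noteq> 0 \<and> poly (map_poly of_rat q) y = 0)
                              \<and> av (x - y) < e))"

definition av_tendsto :: "('a::field_char_0 \<Rightarrow> real) \<Rightarrow> (nat \<Rightarrow> 'a) \<Rightarrow> 'a \<Rightarrow> bool" where
  "av_tendsto av s L \<longleftrightarrow> (\<lambda>n. av (s n - L)) \<longlonglongrightarrow> 0"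

definition ps_sums :: "('a::field_char_0 \<Rightarrow> real) \<Rightarrow> (nat \<Rightarrow> 'a) \<Rightarrow> 'a \<Rightarrow> 'a \<Rightarrow> bool" where
  "ps_sums av a z L \<longleftrightarrow> av_tendsto av (\<lambda>n. \<Sum>i<n. a i * z ^ i) L"

definition ps_eval :: "('a::field_char_0 \<Rightarrow> real) \<Rightarrow> (nat \<Rightarrow> 'a) \<Rightarrow> 'a \<Rightarrow> 'a" where
  "ps_eval av a z = (THE L. ps_sums av a z L)"

definition Bdisk :: "('a::field_char_0 \<Rightarrow> real) \<Rightarrow> 'a \<Rightarrow> real \<Rightarrow> 'a set" where
  "Bdisk av c r = {z. av (z - c) \<le> r}"

definition in_HB :: "('a::field_char_0 \<Rightarrow> real) \<Rightarrow> real \<Rightarrow> (nat \<Rightarrow> 'a) \<Rightarrow> bool" where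
  "in_HB av r a \<longleftrightarrow> (\<forall>z. av z \<le> r \<longrightarrow> (\<exists>L. ps_sums av a z L))"

definition HB_norm :: "('a::field_char_0 \<Rightarrow> real) \<Rightarrow> real \<Rightarrow> (nat \<Rightarrow> 'a) \<Rightarrow> real" where
  "HB_norm av r a = (SUP i. av (a i) * r ^ i)"

definition zero_mult :: "('a::field_char_0 \<Rightarrow> real) \<Rightarrow> ('a \<Rightarrow> 'a) \<Rightarrow> 'a \<Rightarrow> nat \<Rightarrow> bool" where
  "zero_mult av f z0 k \<longleftrightarrow> f z0 = 0 \<and>
     (\<exists>b :: nat \<Rightarrow> 'a. \<exists>d>0. (\<forall>z. av (z - z0) < d \<longrightarrow> ps_sums av b (z - z0) (f z)) \<and>
        (\<forall>i<k. b i = 0) \<and> b k \<noteq> 0)"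

definition P_lam :: "nat \<Rightarrow> 'a::field_char_0 \<Rightarrow> 'a \<Rightarrow> 'a" where
  "P_lam p lam z = lam / of_nat p * z ^ p + (1 - lam / of_nat p) * z ^ (p + 1)"

definition h_fix :: "nat \<Rightarrow> ('a::field_char_0 \<Rightarrow> real) \<Rightarrow> (nat \<Rightarrow> 'a) \<Rightarrow> 'a \<Rightarrow> 'a" where
  "h_fix p av q lam = (THE z. av (z - 1) \<le> av (ps_eval av q 1) / real p \<and>
                              P_lam p lam z + ps_eval av q z = z)"

definition Q_lam :: "nat \<Rightarrow> ('a::field_char_0 \<Rightarrow> real) \<Rightarrow> (nat \<Rightarrow> 'a) \<Rightarrow> 'a \<Rightarrow> 'a \<Rightarrow> 'a" where
  "Q_lam p av q lam z = (let h = h_fix p av q lam in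
      P_lam p lam (z + h - 1) + ps_eval av q (z + h - 1) + 1 - h)"

end

theory Submission
  imports Defs
begin

locale cpf =
  fixes p :: nat and av :: "'a::field_char_0 \<Rightarrow> real"
  assumes Cp: "is_Cp p av"
begin

lemmas CpU = Cp[unfolded is_Cp_def]
lemma prime_p: "prime p" using CpU by (rule conjunct1)
lemma p_ge2: "p \<ge> 2" using prime_p prime_ge_2_nat by blast
lemma av_nonneg[simp]: "av x \<ge> 0" using CpU[THEN conjunct2, THEN conjunct1] by (rule spec)
lemma av_eq0[simp]: "av x = 0 \<longleftrightarrow> x = 0" using CpU[THEN conjunct2, THEN conjunct2, THEN conjunct1] by (rule spec)
lemma av_pos: "x \<noteq> 0 \<Longrightarrow> av x > 0" using av_nonneg[of x] av_eq0[of x] by linarith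
lemma av_mult[simp]: "av (x * y) = av x * av y" using CpU[THEN conjunct2, THEN conjunct2, THEN conjunct2, THEN conjunct1] by (elim allE)
lemma av_ultra: "av (x + y) \<le> max (av x) (av y)" using CpU[THEN conjunct2, THEN conjunct2, THEN conjunct2, THEN conjunct2, THEN conjunct1] by (elim allE)
lemma av_p: "av (of_nat p) = 1 / real p" using CpU[THEN conjunct2, THEN conjunct2, THEN conjunct2, THEN conjunct2, THEN conjunct2, THEN conjunct1] .
lemma av_complete: "(\<forall>e>0. \<exists>N. \<forall>m\<ge>N. \<forall>n\<ge>N. av (s m - s n) < e) \<Longrightarrow>
         (\<exists>L. (\<lambda>n. av (s n - L)) \<longlonglongrightarrow> 0)" by (rule mp[OF spec[OF CpU[THEN conjunct2, THEN conjunct2, THEN conjunct2, THEN conjunct2, THEN conjunct2, THEN conjunct2, THEN conjunct1]]])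
lemma alg_closed: "degree (q::'a poly) > 0 \<Longrightarrow> \<exists>z. poly q z = 0" by (rule mp[OF spec[OF CpU[THEN conjunct2, THEN conjunct2, THEN conjunct2, THEN conjunct2, THEN conjunct2, THEN conjunct2, THEN conjunct2, THEN conjunct1]]])

lemma av_0[simp]: "av 0 = 0" by simp
lemma av_1[simp]: "av 1 = 1"
proof -
  have e: "av 1 * av 1 = av 1" using av_mult[of 1 1] by (simp only: mult_1)
  have n: "av 1 \<noteq> 0" by simp
  have "av 1 * (av 1 - 1) = 0" using e by (simp add: algebra_simps)
  then show ?thesis using n by simp
qed
lemma av_m1[simp]: "av (-1) = 1"
proof -
  have "av (-1) * av (-1) = 1" using av_mult[of "-1" "-1"] by simp
  then have "av (-1)^2 = 1^2" by (simp add: power2_eq_square)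
  then show ?thesis using av_nonneg[of "-1"] power2_eq_iff_nonneg[of "av (-1)" 1] by simp
qed
lemma av_uminus[simp]: "av (- x) = av x"
  using av_mult[of "-1" x] by simp
lemma av_minus_commute: "av (x - y) = av (y - x)"
  using av_uminus[of "x - y"] by simp
lemma av_diff: "av (x - y) \<le> max (av x) (av y)"
  using av_ultra[of x "-y"] by simp
lemma av_power[simp]: "av (x ^ n) = av x ^ n"
  by (induction n) auto
lemma av_inverse[simp]: "av (inverse x) = inverse (av x)"
proof (cases "x = 0")
  case False
  then have "av x * av (inverse x) = 1" using av_mult[of x "inverse x"] by simp
  then show ?thesis by (metis inverse_unique)
qed simp
lemma av_divide[simp]: "av (x / y) = av x / av y"
  by (simp only: divide_inverse av_mult av_inverse)
lemma av_of_nat_le1: "av (of_nat n) \<le> 1"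
proof (induction n)
  case (Suc n)
  have "av (of_nat (Suc n)) = av (1 + of_nat n)" by simp
  also have "\<dots> \<le> max (av 1) (av (of_nat n))" by (rule av_ultra)
  finally show ?case using Suc by simp
qed simp
lemma av_add_le: "av x \<le> X \<Longrightarrow> av y \<le> X \<Longrightarrow> av (x + y) \<le> X"
  using av_ultra[of x y] by linarith
lemma av_add_less: "av x < X \<Longrightarrow> av y < X \<Longrightarrow> av (x + y) < X"
  using av_ultra[of x y] by linarith
lemma av_diff_le: "av x \<le> X \<Longrightarrow> av y \<le> X \<Longrightarrow> av (x - y) \<le> X"
  using av_diff[of x y] by linarith
lemma av_diff_less: "av x < X \<Longrightarrow> av y < X \<Longrightarrow> av (x - y) < X"
  using av_diff[of x y] by linarith
lemma av_add_strict: assumes "av x < av y" shows "av (x + y) = av y"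
proof -
  have "av (x + y) \<le> av y" using av_ultra[of x y] assms by linarith
  moreover have "av y \<le> max (av (x + y)) (av x)" using av_diff[of "x + y" x] by simp
  ultimately show ?thesis using assms by linarith
qed
lemma av_add_strict2: "av x < av y \<Longrightarrow> av (y + x) = av y"
  using av_add_strict by (simp add: add.commute)
lemma av_sum_le: "(\<And>i. i \<in> A \<Longrightarrow> av (f i) \<le> X) \<Longrightarrow> 0 \<le> X \<Longrightarrow> av (sum f A) \<le> X"
proof (induction A rule: infinite_finite_induct)
  case (insert x F) then show ?case by (simp add: av_add_le)
qed auto
lemma av_sum_less: "(\<And>i. i \<in> A \<Longrightarrow> av (f i) < X) \<Longrightarrow> 0 < X \<Longrightarrow> av (sum f A) < X"
proof (induction A rule: infinite_finite_induct)
  case (insert x F) then show ?case by (simp add: av_add_less)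
qed auto
lemma av_tri: "av (x - z) \<le> max (av (x - y)) (av (y - z))"
  using av_ultra[of "x - y" "y - z"] by simp

lemma av_of_p_inv: "av (1 / of_nat p :: 'a) = real p"
  using av_p p_ge2 by simp

end

context cpf
begin

lemma av_tendsto_iff: "av_tendsto av s L \<longleftrightarrow> (\<forall>e>0. \<exists>N. \<forall>n\<ge>N. av (s n - L) < e)"
  unfolding av_tendsto_def LIMSEQ_iff by simp

lemma real_zero_iff: "(f \<longlonglongrightarrow> 0) \<longleftrightarrow> (\<forall>e>0. \<exists>N. \<forall>n\<ge>N. \<bar>f n :: real\<bar> < e)"
  unfolding LIMSEQ_iff by simp

lemma av_tendsto_unique:
  assumes "av_tendsto av s L1" "av_tendsto av s L2" shows "L1 = L2"
proof (rule ccontr)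
  assume "L1 \<noteq> L2"
  then have pos: "av (L1 - L2) > 0" by (simp add: av_pos)
  obtain N1 where N1: "\<forall>n\<ge>N1. av (s n - L1) < av (L1 - L2)"
    using assms(1) pos unfolding av_tendsto_iff by blast
  obtain N2 where N2: "\<forall>n\<ge>N2. av (s n - L2) < av (L1 - L2)"
    using assms(2) pos unfolding av_tendsto_iff by blast
  define n where "n = max N1 N2"
  have "av (L1 - L2) \<le> max (av (L1 - s n)) (av (s n - L2))" by (rule av_tri)
  also have "\<dots> < av (L1 - L2)" using N1 N2 unfolding n_def
    by (simp add: av_minus_commute[of L1])
  finally show False by simp
qed

lemma ps_eval_eq: "ps_sums av a z L \<Longrightarrow> ps_eval av a z = L"
  unfolding ps_eval_def
  by (rule the_equality) (auto simp: ps_sums_def intro: av_tendsto_unique)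

lemma av_tendsto_close:
  assumes "av_tendsto av s L" "(\<lambda>n. av (t n - s n)) \<longlonglongrightarrow> 0"
  shows "av_tendsto av t L"
  unfolding av_tendsto_iff
proof (intro allI impI)
  fix e :: real assume e: "e > 0"
  obtain N1 where N1: "\<forall>n\<ge>N1. av (s n - L) < e" using assms(1) e unfolding av_tendsto_iff by blast
  obtain N2 where N2: "\<forall>n\<ge>N2. \<bar>av (t n - s n)\<bar> < e" using assms(2) e unfolding real_zero_iff by blast
  show "\<exists>N. \<forall>n\<ge>N. av (t n - L) < e"
  proof (intro exI allI impI)
    fix n assume "n \<ge> max N1 N2"
    then have "av (s n - L) < e" "av (t n - s n) < e" using N1 N2 by auto
    then show "av (t n - L) < e" using av_tri[of "t n" L "s n"] by linarith
  qed
qed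

lemma av_tendsto_eventually:
  assumes "av_tendsto av s L" "\<forall>n\<ge>N. t n = s n"
  shows "av_tendsto av t L"
  using assms unfolding av_tendsto_iff by (metis le_trans nat_le_linear)

lemma av_tendsto_const: "av_tendsto av (\<lambda>n. c) c"
  unfolding av_tendsto_def by simp

lemma av_tendsto_add:
  assumes "av_tendsto av s L" "av_tendsto av t M"
  shows "av_tendsto av (\<lambda>n. s n + t n) (L + M)"
  unfolding av_tendsto_iff
proof (intro allI impI)
  fix e :: real assume e: "e > 0"
  obtain N1 where N1: "\<forall>n\<ge>N1. av (s n - L) < e" using assms(1) e unfolding av_tendsto_iff by blast
  obtain N2 where N2: "\<forall>n\<ge>N2. av (t n - M) < e" using assms(2) e unfolding av_tendsto_iff by blast
  show "\<exists>N. \<forall>n\<ge>N. av (s n + t n - (L + M)) < e"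
  proof (intro exI allI impI)
    fix n assume "n \<ge> max N1 N2"
    then have "av (s n - L) < e" "av (t n - M) < e" using N1 N2 by auto
    moreover have "s n + t n - (L + M) = (s n - L) + (t n - M)" by simp
    ultimately show "av (s n + t n - (L + M)) < e" using av_add_less by metis
  qed
qed

lemma av_tendsto_cmult:
  assumes "av_tendsto av s L"
  shows "av_tendsto av (\<lambda>n. c * s n) (c * L)"
proof -
  have "(\<lambda>n. av c * av (s n - L)) \<longlonglongrightarrow> av c * 0"
    using assms unfolding av_tendsto_def by (intro tendsto_mult tendsto_const)
  moreover have "av (c * s n - c * L) = av c * av (s n - L)" for n
    by (metis av_mult right_diff_distrib)
  ultimately show ?thesis unfolding av_tendsto_def by simp
qed

lemma av_tendsto_Suc_iff: "av_tendsto av (\<lambda>n. s (Suc n)) L \<longleftrightarrow> av_tendsto av s L"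
  unfolding av_tendsto_def using filterlim_sequentially_Suc[of "\<lambda>n. av (s n - L)" "nhds 0"] by simp

lemma sum_split_nat: fixes x :: "nat \<Rightarrow> 'b::comm_monoid_add" shows "n \<le> m \<Longrightarrow> (\<Sum>i<m. x i) = (\<Sum>i<n. x i) + (\<Sum>i\<in>{n..<m}. x i)"
  using sum.atLeastLessThan_concat[of 0 n m x] by (simp add: atLeast0LessThan)

lemma series_conv:
  assumes "(\<lambda>n. av (x n)) \<longlonglongrightarrow> 0"
  shows "\<exists>L. av_tendsto av (\<lambda>n. \<Sum>i<n. x i) L"
proof -
  have "\<exists>N. \<forall>m\<ge>N. \<forall>n\<ge>N. av ((\<Sum>i<m. x i) - (\<Sum>i<n. x i)) < e" if e: "e > 0" for e
  proof -
    obtain N where N: "\<forall>n\<ge>N. av (x n) < e" using assms e unfolding real_zero_iff by auto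
    have "av ((\<Sum>i<m. x i) - (\<Sum>i<n. x i)) < e" if "m \<ge> N" "n \<ge> N" for m n
    proof -
      have A: "av (\<Sum>i\<in>{a..<b}. x i) < e" if "a \<ge> N" for a b
        by (rule av_sum_less) (use N that e in auto)
      show ?thesis
      proof (cases "n \<le> m")
        case True
        then show ?thesis using sum_split_nat[OF True, of x] A[of n m] that by simp
      next
        case False
        then have "m \<le> n" by simp
        then show ?thesis using sum_split_nat[of m n x] A[of m n] that
          by (simp add: av_minus_commute)
      qed
    qed
    then show ?thesis by blast
  qed
  then obtain L where "(\<lambda>n. av ((\<Sum>i<n. x i) - L)) \<longlonglongrightarrow> 0"
    using av_complete[of "\<lambda>n. \<Sum>i<n. x i"] by blast
  then show ?thesis unfolding av_tendsto_def by blast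
qed

lemma terms_to_zero:
  assumes "av_tendsto av (\<lambda>n. \<Sum>i<n. x i) L"
  shows "(\<lambda>n. av (x n)) \<longlonglongrightarrow> 0"
  unfolding real_zero_iff
proof (intro allI impI)
  fix e :: real assume e: "e > 0"
  obtain N where N: "\<forall>n\<ge>N. av ((\<Sum>i<n. x i) - L) < e" using assms e unfolding av_tendsto_iff by blast
  show "\<exists>N. \<forall>n\<ge>N. \<bar>av (x n)\<bar> < e"
  proof (intro exI allI impI)
    fix n assume n: "n \<ge> N"
    have "x n = ((\<Sum>i<Suc n. x i) - L) - ((\<Sum>i<n. x i) - L)" by simp
    then have "av (x n) \<le> max (av ((\<Sum>i<Suc n. x i) - L)) (av ((\<Sum>i<n. x i) - L))"
      by (metis av_diff)
    moreover have "av ((\<Sum>i<Suc n. x i) - L) < e" using N[rule_format, of "Suc n"] n by (simp del: sum.lessThan_Suc)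
    moreover have "av ((\<Sum>i<n. x i) - L) < e" using N n by auto
    ultimately show "\<bar>av (x n)\<bar> < e" by simp
  qed
qed

lemma series_tail_le:
  assumes "av_tendsto av (\<lambda>n. \<Sum>i<n. x i) L" "0 \<le> X" "\<forall>i\<ge>K. av (x i) \<le> X"
  shows "av (L - (\<Sum>i<K. x i)) \<le> X"
proof (rule ccontr)
  assume c: "\<not> ?thesis"
  then have pos: "av (L - (\<Sum>i<K. x i)) > 0" using assms(2) by linarith
  obtain N where N: "\<forall>n\<ge>N. av ((\<Sum>i<n. x i) - L) < av (L - (\<Sum>i<K. x i))"
    using assms(1) pos unfolding av_tendsto_iff by blast
  define n where "n = max N K"
  have s: "(\<Sum>i<n. x i) = (\<Sum>i<K. x i) + (\<Sum>i\<in>{K..<n}. x i)"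
    by (rule sum_split_nat) (simp add: n_def)
  have b: "av (\<Sum>i\<in>{K..<n}. x i) \<le> X" by (rule av_sum_le) (use assms in auto)
  have "av (L - (\<Sum>i<K. x i)) \<le> max (av (L - (\<Sum>i<n. x i))) (av ((\<Sum>i<n. x i) - (\<Sum>i<K. x i)))"
    by (rule av_tri)
  moreover have "av (L - (\<Sum>i<n. x i)) < av (L - (\<Sum>i<K. x i))"
    using N unfolding n_def by (simp add: av_minus_commute[of L])
  moreover have "av ((\<Sum>i<n. x i) - (\<Sum>i<K. x i)) \<le> X" using s b by simp
  ultimately show False using c by linarith
qed

lemma sup_below:
  fixes \<beta> :: "nat \<Rightarrow> real"
  assumes "\<beta> \<longlonglongrightarrow> 0" "\<forall>i. \<beta> i \<ge> 0" "\<forall>i\<ge>K. \<beta> i < X"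
  shows "\<exists>X'. 0 \<le> X' \<and> X' < X \<and> (\<forall>i\<ge>K. \<beta> i \<le> X')"
proof -
  have X: "X > 0" using assms(2,3) by (meson le_less_trans order_refl)
  obtain M where M: "\<forall>n\<ge>M. \<bar>\<beta> n\<bar> < X / 2" using assms(1) X unfolding real_zero_iff
    by (meson half_gt_zero)
  define X' where "X' = (if K < M then max (X/2) (Max (\<beta> ` {K..<M})) else X/2)"
  have fin: "finite (\<beta> ` {K..<M})" by simp
  have "X' < X"
  proof (cases "K < M")
    case False then show ?thesis unfolding X'_def using X by simp
  next
    case True
    then have "Max (\<beta> ` {K..<M}) < X" using assms(3) fin by (subst Max_less_iff) auto
    then show ?thesis unfolding X'_def using X by simp
  qed
  moreover have "\<forall>i\<ge>K. \<beta> i \<le> X'"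
  proof (intro allI impI)
    fix i assume i: "i \<ge> K"
    show "\<beta> i \<le> X'"
    proof (cases "i < M")
      case True then have "\<beta> i \<le> Max (\<beta> ` {K..<M})" using i fin by (intro Max_ge) auto
      then show ?thesis unfolding X'_def using True i by (simp add: le_max_iff_disj)
    next
      case False then have "\<bar>\<beta> i\<bar> < X / 2" using M by simp
      then have "\<beta> i < X / 2" by linarith
      then show ?thesis unfolding X'_def by (simp add: le_max_iff_disj)
    qed
  qed
  moreover have "0 \<le> X'" unfolding X'_def using X by (simp add: le_max_iff_disj)
  ultimately show ?thesis by blast
qed

lemma series_tail_less:
  assumes "av_tendsto av (\<lambda>n. \<Sum>i<n. x i) L" "\<forall>i\<ge>K. av (x i) < X"
  shows "av (L - (\<Sum>i<K. x i)) < X"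
proof -
  obtain X' where "0 \<le> X'" "X' < X" "\<forall>i\<ge>K. av (x i) \<le> X'"
    using sup_below[of "\<lambda>i. av (x i)" K X] terms_to_zero[OF assms(1)] assms(2) by auto
  moreover have "av (L - (\<Sum>i<K. x i)) \<le> X'" using series_tail_le[OF assms(1)] calculation by blast
  ultimately show ?thesis by linarith
qed

end

context cpf
begin

lemma poly_noroot_coeff:
  fixes P :: "'a poly"
  assumes "P \<noteq> 0" "\<forall>z. av z \<le> 1 \<longrightarrow> poly P z \<noteq> 0"
  shows "\<forall>k\<ge>1. av (coeff P k) < av (coeff P 0)"
  using assms
proof (induction "degree P" arbitrary: P)
  case 0
  have c0: "coeff P 0 \<noteq> 0" using 0(3)[rule_format, of 0] by (simp add: poly_0_coeff_0)
  show ?case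
  proof (intro allI impI)
    fix k :: nat assume "k \<ge> 1"
    then have "coeff P k = 0" using 0(1) by (intro coeff_eq_0) simp
    then show "av (coeff P k) < av (coeff P 0)" using c0 av_pos by simp
  qed
next
  case (Suc n)
  obtain \<alpha> where \<alpha>: "poly P \<alpha> = 0" using alg_closed[of P] Suc(2) by auto
  have a1: "av \<alpha> > 1" using Suc(4) \<alpha> by (meson not_le)
  have "[:-\<alpha>, 1:] dvd P" using \<alpha> by (simp add: poly_eq_0_iff_dvd)
  then obtain g where g: "P = [:-\<alpha>, 1:] * g" by (auto elim: dvdE)
  have g0: "g \<noteq> 0" using g Suc(3) by auto
  have "degree P = degree [:-\<alpha>, 1:] + degree g" unfolding g by (rule degree_mult_eq) (auto simp: g0)
  then have dg: "n = degree g" using Suc(2) by simp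
  have gnr: "\<forall>z. av z \<le> 1 \<longrightarrow> poly g z \<noteq> 0" using Suc(4) g by auto
  have IH: "\<forall>k\<ge>1. av (coeff g k) < av (coeff g 0)" using Suc(1)[OF dg g0 gnr] .
  have cg0: "coeff g 0 \<noteq> 0" using gnr[rule_format, of 0] by (simp add: poly_0_coeff_0)
  have PP: "P = smult (-\<alpha>) g + pCons 0 g" using g by (simp add: mult_pCons_left)
  have cP0: "coeff P 0 = - \<alpha> * coeff g 0" using PP by simp
  have cPS: "coeff P (Suc k) = - \<alpha> * coeff g (Suc k) + coeff g k" for k using PP by simp
  have bnd: "av (coeff g k) \<le> av (coeff g 0)" for k
    using IH by (cases k) (auto simp: less_imp_le)
  have pos: "av (coeff g 0) > 0" using cg0 av_pos by simp
  show ?case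
  proof (intro allI impI)
    fix k :: nat assume "k \<ge> 1"
    then obtain j where k: "k = Suc j" by (cases k) auto
    have "av (coeff g (Suc j)) < av (coeff g 0)" using IH by simp
    then have "av \<alpha> * av (coeff g (Suc j)) < av \<alpha> * av (coeff g 0)"
      using a1 by (intro mult_strict_left_mono) auto
    then have "av (- \<alpha> * coeff g (Suc j)) < av \<alpha> * av (coeff g 0)" by simp
    moreover have "1 * av (coeff g 0) < av \<alpha> * av (coeff g 0)"
      using a1 pos by (intro mult_strict_right_mono) auto
    then have "av (coeff g j) < av \<alpha> * av (coeff g 0)"
      using bnd[of j] by linarith
    ultimately have "av (coeff P (Suc j)) < av \<alpha> * av (coeff g 0)"
      unfolding cPS by (rule av_add_less)
    then show "av (coeff P k) < av (coeff P 0)" using k cP0 by simp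
  qed
qed

lemma poly_root_in_disk:
  fixes P :: "'a poly"
  assumes "coeff P 0 \<noteq> 0" "k \<ge> 1" "av (coeff P k) \<ge> av (coeff P 0)"
  shows "\<exists>z. av z \<le> 1 \<and> poly P z = 0"
proof (rule ccontr)
  assume "\<not> ?thesis"
  then have "\<forall>z. av z \<le> 1 \<longrightarrow> poly P z \<noteq> 0" by blast
  moreover have "P \<noteq> 0" using assms(1) by auto
  ultimately have "av (coeff P k) < av (coeff P 0)" using poly_noroot_coeff assms(2) by blast
  then show False using assms(3) by simp
qed

lemma nth_root_exists: "N \<ge> 1 \<Longrightarrow> \<exists>c::'a. c ^ N = y"
proof -
  assume N: "N \<ge> 1"
  have "degree (monom (1::'a) N + [:-y:]) = N" using N
    by (subst degree_add_eq_left) (auto simp: degree_monom_eq)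
  then have "\<exists>c. poly (monom 1 N + [:-y:]) c = 0" using N by (intro alg_closed) simp
  then obtain c where "poly (monom 1 N + [:-y:]) c = 0" by blast
  then show ?thesis by (auto simp: poly_monom)
qed

end

lemma swap_tri:
  fixes f :: "nat \<Rightarrow> nat \<Rightarrow> 'b::comm_monoid_add"
  shows "(\<Sum>j<K. \<Sum>k\<le>j. f j k) = (\<Sum>k<K. \<Sum>i<K-k. f (i+k) k)"
proof -
  have "(\<Sum>j<K. \<Sum>k\<le>j. f j k) = (\<Sum>(j,k)\<in>Sigma {..<K} (\<lambda>j. {..j}). f j k)"
    by (rule sum.Sigma) auto
  also have "\<dots> = (\<Sum>(k,i)\<in>Sigma {..<K} (\<lambda>k. {..<K-k}). f (i+k) k)"
    by (rule sum.reindex_bij_witness[where i="\<lambda>(k,i). (i+k,k)" and j="\<lambda>(j,k). (k, j-k)"]) auto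
  also have "\<dots> = (\<Sum>k<K. \<Sum>i<K-k. f (i+k) k)"
    by (rule sum.Sigma[symmetric]) auto
  finally show ?thesis .
qed

lemma real_null_le:
  fixes f g :: "nat \<Rightarrow> real"
  assumes "\<And>n. 0 \<le> f n" "\<And>n. f n \<le> g n" "g \<longlonglongrightarrow> 0"
  shows "f \<longlonglongrightarrow> 0"
  by (rule Lim_null_comparison[OF _ assms(3)]) (use assms in auto)

context cpf
begin

definition conv0 :: "(nat \<Rightarrow> 'a) \<Rightarrow> real \<Rightarrow> bool" where
  "conv0 a R \<longleftrightarrow> (\<lambda>k. av (a k) * R ^ k) \<longlonglongrightarrow> 0"

lemma ps_conv:
  assumes R: "R > 0" and a: "conv0 a R" and z: "av z \<le> R"
  shows "ps_sums av a z (ps_eval av a z)"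
proof -
  have "(\<lambda>k. av (a k * z ^ k)) \<longlonglongrightarrow> 0"
  proof (rule real_null_le)
    show "av (a k * z ^ k) \<le> av (a k) * R ^ k" for k
      using z by (simp add: mult_left_mono power_mono)
  qed (use a in \<open>auto simp: conv0_def\<close>)
  then have "\<exists>L. av_tendsto av (\<lambda>n. \<Sum>i<n. a i * z ^ i) L" by (rule series_conv)
  then obtain L where "av_tendsto av (\<lambda>n. \<Sum>i<n. a i * z ^ i) L" by blast
  then have "ps_sums av a z L" unfolding ps_sums_def .
  then show ?thesis using ps_eval_eq by simp
qed

definition rcT :: "(nat \<Rightarrow> 'a) \<Rightarrow> 'a \<Rightarrow> nat \<Rightarrow> nat \<Rightarrow> 'a" where
  "rcT a c k i = a (i+k) * of_nat ((i+k) choose k) * c ^ i"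

definition rc :: "(nat \<Rightarrow> 'a) \<Rightarrow> 'a \<Rightarrow> nat \<Rightarrow> 'a" where
  "rc a c k = (SOME L. av_tendsto av (\<lambda>n. \<Sum>i<n. rcT a c k i) L)"

lemma rcT_bound:
  assumes R: "R > 0" and c: "av c \<le> R"
  shows "av (rcT a c k i) * R ^ k \<le> av (a (i+k)) * R ^ (i+k)"
proof -
  have "av (rcT a c k i) = av (a (i+k)) * av (of_nat ((i+k) choose k) :: 'a) * av c ^ i"
    unfolding rcT_def by simp
  also have "\<dots> \<le> av (a (i+k)) * 1 * R ^ i"
    using c av_of_nat_le1 by (intro mult_mono power_mono) auto
  finally have "av (rcT a c k i) * R ^ k \<le> av (a (i+k)) * R ^ i * R ^ k"
    using R by (simp add: mult_right_mono)
  then show ?thesis by (simp add: power_add mult.assoc)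
qed

lemma rcT_bound':
  assumes R: "R > 0" and c: "av c \<le> R"
  shows "av (rcT a c k i) \<le> av (a (i+k)) * R ^ (i+k) / R ^ k"
  using rcT_bound[OF assms, of a k i] R by (simp add: field_simps)

lemma rc_sums:
  assumes R: "R > 0" and a: "conv0 a R" and c: "av c \<le> R"
  shows "av_tendsto av (\<lambda>n. \<Sum>i<n. rcT a c k i) (rc a c k)"
proof -
  have sh: "(\<lambda>i. av (a (i+k)) * R ^ (i+k)) \<longlonglongrightarrow> 0"
    using a LIMSEQ_ignore_initial_segment[of "\<lambda>k. av (a k) * R ^ k" 0 k] by (simp add: conv0_def)
  have "(\<lambda>i. av (rcT a c k i)) \<longlonglongrightarrow> 0"
  proof (rule real_null_le)
    show "av (rcT a c k i) \<le> av (a (i+k)) * R ^ (i+k) / R ^ k" for i by (rule rcT_bound'[OF R c])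
    show "(\<lambda>i. av (a (i+k)) * R ^ (i+k) / R ^ k) \<longlonglongrightarrow> 0"
      using tendsto_divide_zero[OF sh, of "R^k"] by simp
  qed auto
  then obtain L where "av_tendsto av (\<lambda>n. \<Sum>i<n. rcT a c k i) L" using series_conv by blast
  then show ?thesis unfolding rc_def by (rule someI)
qed

lemma rc_bound:
  assumes R: "R > 0" and a: "conv0 a R" and c: "av c \<le> R"
    and X: "0 \<le> X" "\<forall>j\<ge>k. av (a j) * R ^ j \<le> X"
  shows "av (rc a c k) * R ^ k \<le> X"
proof -
  have "av (rc a c k - (\<Sum>i<0. rcT a c k i)) \<le> X / R ^ k"
  proof (rule series_tail_le[OF rc_sums[OF R a c]])
    show "0 \<le> X / R ^ k" using X R by simp
    show "\<forall>i\<ge>0. av (rcT a c k i) \<le> X / R ^ k"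
    proof (intro allI impI)
      fix i :: nat
      have "av (rcT a c k i) \<le> av (a (i+k)) * R ^ (i+k) / R ^ k" by (rule rcT_bound'[OF R c])
      also have "\<dots> \<le> X / R ^ k" using X(2) R by (intro divide_right_mono) auto
      finally show "av (rcT a c k i) \<le> X / R ^ k" .
    qed
  qed
  then show ?thesis using R by (simp add: field_simps)
qed

lemma rc_first:
  assumes R: "R > 0" and a: "conv0 a R" and c: "av c \<le> R"
    and Y: "\<forall>j>k. av (a j) * R ^ j < Y"
  shows "av (rc a c k - a k) * R ^ k < Y"
proof -
  have "av (rc a c k - (\<Sum>i<1. rcT a c k i)) < Y / R ^ k"
  proof (rule series_tail_less[OF rc_sums[OF R a c]])
    show "\<forall>i\<ge>1. av (rcT a c k i) < Y / R ^ k"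
    proof (intro allI impI)
      fix i :: nat assume i: "i \<ge> 1"
      have "av (rcT a c k i) \<le> av (a (i+k)) * R ^ (i+k) / R ^ k" by (rule rcT_bound'[OF R c])
      also have "\<dots> < Y / R ^ k" using Y i R by (intro divide_strict_right_mono) auto
      finally show "av (rcT a c k i) < Y / R ^ k" .
    qed
  qed
  moreover have "(\<Sum>i<1. rcT a c k i) = a k" by (simp add: rcT_def)
  ultimately show ?thesis using R by (simp add: field_simps)
qed

lemma rc_finite_identity:
  "(\<Sum>j<K. a j * (c + s) ^ j) = (\<Sum>k<K. s ^ k * (\<Sum>i<K-k. rcT a c k i))"
proof -
  have b: "(c+s)^j = (\<Sum>k\<le>j. of_nat (j choose k) * s^k * c^(j-k))" for j
    using binomial_ring[of s c j] by (simp add: add.commute)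
  have "(\<Sum>j<K. a j * (c + s) ^ j) = (\<Sum>j<K. \<Sum>k\<le>j. a j * (of_nat (j choose k) * s ^ k * c ^ (j - k)))"
    by (rule sum.cong[OF refl]) (simp only: b sum_distrib_left)
  also have "\<dots> = (\<Sum>k<K. \<Sum>i<K-k. a (i+k) * (of_nat ((i+k) choose k) * s ^ k * c ^ (i + k - k)))"
    by (rule swap_tri)
  also have "\<dots> = (\<Sum>k<K. s ^ k * (\<Sum>i<K-k. rcT a c k i))"
    by (simp add: rcT_def sum_distrib_left mult_ac)
  finally show ?thesis .
qed

lemma rc_ps:
  assumes R: "R > 0" and a: "conv0 a R" and c: "av c \<le> R" and s: "av s \<le> R"
  shows "ps_sums av (rc a c) s (ps_eval av a (c + s))"
proof -
  have cs: "av (c + s) \<le> R" using c s by (rule av_add_le)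
  have A: "av_tendsto av (\<lambda>K. \<Sum>j<K. a j * (c + s) ^ j) (ps_eval av a (c + s))"
    using ps_conv[OF R a cs] unfolding ps_sums_def .
  have diff: "(\<Sum>k<K. rc a c k * s ^ k) - (\<Sum>j<K. a j * (c + s) ^ j)
      = (\<Sum>k<K. s ^ k * (rc a c k - (\<Sum>i<K-k. rcT a c k i)))" for K
    by (simp add: rc_finite_identity sum_subtractf right_diff_distrib mult.commute)
  have small: "av ((\<Sum>k<K. rc a c k * s ^ k) - (\<Sum>j<K. a j * (c + s) ^ j)) \<le> e"
    if e: "e \<ge> 0" and M: "\<forall>j\<ge>K. av (a j) * R ^ j \<le> e" for K e
  proof -
    have "av (s ^ k * (rc a c k - (\<Sum>i<K-k. rcT a c k i))) \<le> e" if k: "k < K" for k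
    proof -
      have "av (rc a c k - (\<Sum>i<K-k. rcT a c k i)) \<le> e / R ^ k"
      proof (rule series_tail_le[OF rc_sums[OF R a c]])
        show "0 \<le> e / R ^ k" using e R by simp
        show "\<forall>i\<ge>K-k. av (rcT a c k i) \<le> e / R ^ k"
        proof (intro allI impI)
          fix i assume i: "i \<ge> K - k"
          have "av (rcT a c k i) \<le> av (a (i+k)) * R ^ (i+k) / R ^ k" by (rule rcT_bound'[OF R c])
          also have "\<dots> \<le> e / R ^ k" using M i k R by (intro divide_right_mono) auto
          finally show "av (rcT a c k i) \<le> e / R ^ k" .
        qed
      qed
      moreover have "av (s ^ k) \<le> R ^ k" using s by (simp add: power_mono)
      ultimately have "av (s ^ k) * av (rc a c k - (\<Sum>i<K-k. rcT a c k i)) \<le> R ^ k * (e / R ^ k)"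
        by (intro mult_mono) (use e R in auto)
      then show ?thesis using R by simp
    qed
    then show ?thesis unfolding diff by (intro av_sum_le) (use e in auto)
  qed
  have "(\<lambda>K. av ((\<Sum>k<K. rc a c k * s ^ k) - (\<Sum>j<K. a j * (c + s) ^ j))) \<longlonglongrightarrow> 0"
    unfolding real_zero_iff
  proof (intro allI impI)
    fix e :: real assume e: "e > 0"
    obtain M where M: "\<forall>n\<ge>M. \<bar>av (a n) * R ^ n\<bar> < e / 2"
      using a e unfolding conv0_def real_zero_iff by (meson half_gt_zero)
    show "\<exists>N. \<forall>n\<ge>N. \<bar>av ((\<Sum>k<n. rc a c k * s ^ k) - (\<Sum>j<n. a j * (c + s) ^ j))\<bar> < e"
    proof (intro exI allI impI)
      fix n assume n: "n \<ge> M"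
      have "\<forall>j\<ge>n. av (a j) * R ^ j \<le> e / 2"
      proof (intro allI impI)
        fix j assume "j \<ge> n"
        then have "\<bar>av (a j) * R ^ j\<bar> < e / 2" using M n by simp
        then show "av (a j) * R ^ j \<le> e / 2" by linarith
      qed
      then have "av ((\<Sum>k<n. rc a c k * s ^ k) - (\<Sum>j<n. a j * (c + s) ^ j)) \<le> e / 2"
        using e by (intro small) auto
      then show "\<bar>av ((\<Sum>k<n. rc a c k * s ^ k) - (\<Sum>j<n. a j * (c + s) ^ j))\<bar> < e"
        using e by simp
    qed
  qed
  then show ?thesis unfolding ps_sums_def by (rule av_tendsto_close[OF A])
qed

end

lemma pow_le_lin: fixes t R :: real assumes "0 \<le> t" "t \<le> R" "k \<ge> 1"
  shows "t ^ k \<le> t * R ^ (k - 1)"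
proof -
  obtain j where k: "k = Suc j" using assms(3) by (cases k) auto
  have "t ^ j \<le> R ^ j" using assms by (intro power_mono) auto
  then show ?thesis using k assms(1) by (simp add: mult_left_mono)
qed

context cpf
begin

lemma ps_sums_at0: "ps_sums av b 0 L \<Longrightarrow> L = b 0"
proof -
  assume h: "ps_sums av b 0 L"
  have eq: "\<forall>n\<ge>1. (\<Sum>i<n. b i * 0 ^ i) = b 0"
  proof (intro allI impI)
    fix n :: nat assume "n \<ge> 1"
    then have "(\<Sum>i<n. b i * 0 ^ i) = (\<Sum>i\<in>{0}. b i * 0 ^ i)"
      by (intro sum.mono_neutral_right) auto
    then show "(\<Sum>i<n. b i * 0 ^ i) = b 0" by simp
  qed
  have "av_tendsto av (\<lambda>n. \<Sum>i<n. b i * 0 ^ i) (b 0)"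
    using av_tendsto_eventually[OF av_tendsto_const[of "b 0"] eq] .
  then show ?thesis using h unfolding ps_sums_def by (rule av_tendsto_unique[rotated])
qed

lemma rc_0:
  assumes R: "R > 0" and a: "conv0 a R" and c: "av c \<le> R"
  shows "rc a c 0 = ps_eval av a c"
proof -
  have h: "ps_sums av (rc a c) 0 (ps_eval av a (c + 0))" by (rule rc_ps[OF R a c]) (use R in simp)
  show ?thesis using ps_sums_at0[OF h] by simp
qed

lemma ps_eval_bound:
  assumes R: "R > 0" and a: "conv0 a R" and z: "av z \<le> R"
    and X: "0 \<le> X" "\<forall>k. av (a k) * R ^ k \<le> X"
  shows "av (ps_eval av a z) \<le> X"
proof -
  have "av (ps_eval av a z - (\<Sum>i<0. a i * z ^ i)) \<le> X"
  proof (rule series_tail_le[OF ps_conv[OF R a z, unfolded ps_sums_def] X(1)])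
    show "\<forall>i\<ge>0. av (a i * z ^ i) \<le> X"
    proof (intro allI impI)
      fix i :: nat
      have "av (a i * z ^ i) \<le> av (a i) * R ^ i" using z by (simp add: mult_left_mono power_mono)
      then show "av (a i * z ^ i) \<le> X" using X(2)[rule_format, of i] by linarith
    qed
  qed
  then show ?thesis by simp
qed

lemma ps_lipschitz:
  assumes R: "R > 0" and a: "conv0 a R" and x: "av x \<le> R" and y: "av y \<le> R"
    and A: "0 \<le> A" "\<forall>k. av (a k) * R ^ k \<le> A"
  shows "av (ps_eval av a x - ps_eval av a y) \<le> A * av (x - y) / R"
proof -
  define s where "s = x - y"
  have s: "av s \<le> R" unfolding s_def using x y by (rule av_diff_le)
  have S: "av_tendsto av (\<lambda>n. \<Sum>i<n. rc a y i * s ^ i) (ps_eval av a x)"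
    using rc_ps[OF R a y s] unfolding ps_sums_def s_def by simp
  have "av (ps_eval av a x - (\<Sum>i<1. rc a y i * s ^ i)) \<le> A * av s / R"
  proof (rule series_tail_le[OF S])
    show "0 \<le> A * av s / R" using A R by simp
    show "\<forall>i\<ge>1. av (rc a y i * s ^ i) \<le> A * av s / R"
    proof (intro allI impI)
      fix i :: nat assume i: "i \<ge> 1"
      have b: "av (rc a y i) * R ^ i \<le> A" using rc_bound[OF R a y A(1)] A(2) by blast
      have "av (s) ^ i \<le> av s * R ^ (i - 1)" using pow_le_lin[OF _ s i] by simp
      then have "av (rc a y i) * av s ^ i \<le> av (rc a y i) * (av s * R ^ (i - 1))"
        by (intro mult_left_mono) auto
      also have "\<dots> = av (rc a y i) * R ^ i * av s / R"
        using i R by (cases i) (auto simp: field_simps)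
      also have "\<dots> \<le> A * av s / R"
        using b R by (intro divide_right_mono mult_right_mono) auto
      finally show "av (rc a y i * s ^ i) \<le> A * av s / R" by simp
    qed
  qed
  then show ?thesis using rc_0[OF R a y] unfolding s_def by simp
qed

definition wd :: "(nat \<Rightarrow> 'a) \<Rightarrow> real \<Rightarrow> nat \<Rightarrow> bool" where
  "wd a R N \<longleftrightarrow> conv0 a R \<and> (\<forall>k. av (a k) * R ^ k \<le> av (a N) * R ^ N) \<and>
     (\<forall>k>N. av (a k) * R ^ k < av (a N) * R ^ N)"

lemma wd_nonzero: assumes "R > 0" "wd a R N" shows "a N \<noteq> 0"
proof
  assume "a N = 0"
  then have "av (a (Suc N)) * R ^ Suc N < 0" using assms unfolding wd_def by auto
  moreover have "av (a (Suc N)) * R ^ Suc N \<ge> 0" using assms by simp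
  ultimately show False by simp
qed

lemma exist_step:
  assumes R: "R > 0" and w: "wd a R N" and N: "N \<ge> 1" and t: "av t \<le> R"
    and M: "M \<ge> N" and X: "0 \<le> X" "\<forall>j>M. av (a j) * R ^ j \<le> X"
  shows "\<exists>t'. av t' \<le> R \<and> av (t' - t) ^ N * av (a N) \<le> av (ps_eval av a t) \<and> av (ps_eval av a t') \<le> X"
proof (cases "ps_eval av a t = 0")
  case True
  then show ?thesis using t X N by (intro exI[of _ t]) (simp add: zero_power)
next
  case False
  have a: "conv0 a R" using w unfolding wd_def by simp
  define b where "b = rc a t"
  have b0: "b 0 = ps_eval av a t" unfolding b_def using rc_0[OF R a t] .
  have aN: "a N \<noteq> 0" using wd_nonzero[OF R w] .
  have "av (b N - a N) * R ^ N < av (a N) * R ^ N"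
    unfolding b_def by (rule rc_first[OF R a t]) (use w in \<open>auto simp: wd_def\<close>)
  then have "av (b N - a N) < av (a N)" using R by simp
  then have "av ((b N - a N) + a N) = av (a N)" by (rule av_add_strict)
  then have bN: "av (b N) = av (a N)" by simp
  then have bN0: "b N \<noteq> 0" using aN by auto
  obtain c where c: "c ^ N = b 0 / b N" using nth_root_exists[OF N] by blast
  define Pol where "Pol = (\<Sum>k\<le>M. monom (b k * c ^ k) k)"
  have cP: "coeff Pol j = (if j \<le> M then b j * c ^ j else 0)" for j
    unfolding Pol_def coeff_sum by (simp add: coeff_monom)
  have cP0: "coeff Pol 0 = b 0" using cP[of 0] by simp
  have cPN: "coeff Pol N = b 0" using cP[of N] M c bN0 by simp
  have b00: "b 0 \<noteq> 0" using False b0 by simp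
  have "\<exists>z. av z \<le> 1 \<and> poly Pol z = 0"
    by (rule poly_root_in_disk[of Pol N]) (simp_all only: cP0 cPN b00 N order_refl not_False_eq_True)
  then obtain u where u: "av u \<le> 1" "poly Pol u = 0" by blast
  define s where "s = c * u"
  have "av (c ^ N) = av (b 0 / b N)" using c by (rule arg_cong)
  then have avc: "av c ^ N = av (b 0) / av (a N)" using bN by (simp only: av_power av_divide)
  have "av s ^ N = av c ^ N * av u ^ N" unfolding s_def by (simp add: power_mult_distrib)
  also have "\<dots> \<le> av c ^ N * 1" using u by (intro mult_left_mono) (auto simp: power_le_one)
  finally have sN: "av s ^ N \<le> av (b 0) / av (a N)" using avc by simp
  have aNp: "av (a N) > 0" using aN av_pos by simp
  have "av (b 0) \<le> av (a N) * R ^ N"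
    unfolding b0 by (rule ps_eval_bound[OF R a t]) (use w R in \<open>auto simp: wd_def\<close>)
  then have "av (b 0) / av (a N) \<le> R ^ N" using aNp by (simp add: divide_le_eq mult.commute)
  then have sNR: "av s ^ N \<le> R ^ N" using sN by linarith
  obtain j where j: "N = Suc j" using N by (cases N) auto
  have "av s ^ Suc j \<le> R ^ Suc j" using sNR unfolding j .
  then have sR: "av s \<le> R" by (rule power_le_imp_le_base) (use R in simp)
  have t': "av (t + s) \<le> R" using t sR by (rule av_add_le)
  have S: "av_tendsto av (\<lambda>n. \<Sum>i<n. b i * s ^ i) (ps_eval av a (t + s))"
    using rc_ps[OF R a t sR] unfolding ps_sums_def b_def .
  have poly0: "(\<Sum>i<Suc M. b i * s ^ i) = 0"
  proof -
    have "poly Pol u = (\<Sum>k\<le>M. b k * c ^ k * u ^ k)" unfolding Pol_def poly_sum by (simp add: poly_monom)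
    also have "\<dots> = (\<Sum>i<Suc M. b i * s ^ i)" unfolding s_def
      by (simp add: lessThan_Suc_atMost power_mult_distrib mult.assoc)
    finally show ?thesis using u by simp
  qed
  have "av (ps_eval av a (t + s) - (\<Sum>i<Suc M. b i * s ^ i)) \<le> X"
  proof (rule series_tail_le[OF S X(1)])
    show "\<forall>i\<ge>Suc M. av (b i * s ^ i) \<le> X"
    proof (intro allI impI)
      fix i assume i: "i \<ge> Suc M"
      have "av (b i) * R ^ i \<le> X" unfolding b_def
        by (rule rc_bound[OF R a t X(1)]) (use X(2) i in auto)
      moreover have "av (b i) * av s ^ i \<le> av (b i) * R ^ i"
        using sR by (intro mult_left_mono power_mono) auto
      ultimately show "av (b i * s ^ i) \<le> X" by simp
    qed
  qed
  then have "av (ps_eval av a (t + s)) \<le> X" using poly0 by simp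
  moreover have "av s ^ N * av (a N) \<le> av (b 0)"
    using sN aNp by (simp add: le_divide_eq)
  then have "av ((t + s) - t) ^ N * av (a N) \<le> av (ps_eval av a t)"
    using b0 by simp
  ultimately show ?thesis using t' by blast
qed

end

context cpf
begin

lemma ultra_cauchy_aux:
  assumes e: "e > 0" and h: "\<forall>i\<ge>K. av (x (Suc i) - x i) < e" and n: "n \<ge> K"
  shows "av (x (n + d) - x n) < e"
proof (induction d)
  case 0 then show ?case using e by simp
next
  case (Suc d)
  have "x (n + Suc d) - x n = (x (Suc (n + d)) - x (n + d)) + (x (n + d) - x n)" by simp
  moreover have "av (x (Suc (n + d)) - x (n + d)) < e" using h n by simp
  ultimately show ?case using Suc av_add_less by metis
qed

lemma ultra_cauchy:
  assumes e: "e > 0" and h: "\<forall>i\<ge>K. av (x (Suc i) - x i) < e" and m: "m \<ge> K" and n: "n \<ge> K"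
  shows "av (x m - x n) < e"
proof (cases "n \<le> m")
  case True
  then obtain d where "m = n + d" using le_Suc_ex by blast
  then show ?thesis using ultra_cauchy_aux[OF e h n] by simp
next
  case False
  then obtain d where "n = m + d" using le_Suc_ex[of m n] by auto
  then show ?thesis using ultra_cauchy_aux[OF e h m, of d] by (simp add: av_minus_commute)
qed

lemma exists_zero:
  assumes R: "R > 0" and w: "wd a R N" and N: "N \<ge> 1"
  shows "\<exists>z. av z \<le> R \<and> ps_eval av a z = 0"
proof -
  have a: "conv0 a R" using w unfolding wd_def by simp
  have aNp: "av (a N) > 0" using wd_nonzero[OF R w] av_pos by simp
  obtain j where j: "N = Suc j" using N by (cases N) auto
  define X where "X n = av (a N) * (1 / real (Suc n)) ^ N" for n
  have Xpos: "X n > 0" for n unfolding X_def using aNp by simp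
  have Xle: "X n \<le> av (a N) * (1 / real (Suc n))" for n
  proof -
    have "(1 / real (Suc n)) ^ N \<le> (1 / real (Suc n)) * 1 ^ (N - 1)"
      by (rule pow_le_lin) (use N in auto)
    then have "(1 / real (Suc n)) ^ N \<le> 1 / real (Suc n)" by simp
    from mult_left_mono[OF this, of "av (a N)"] show ?thesis unfolding X_def using aNp by simp
  qed
  have exM: "\<exists>M. \<forall>j>M. av (a j) * R ^ j \<le> X n" for n
  proof -
    obtain M where M: "\<forall>j\<ge>M. \<bar>av (a j) * R ^ j\<bar> < X n"
      using a Xpos[of n] unfolding conv0_def real_zero_iff by blast
    show ?thesis
    proof (intro exI allI impI)
      fix j assume "j > M"
      then have "\<bar>av (a j) * R ^ j\<bar> < X n" using M by simp
      then show "av (a j) * R ^ j \<le> X n" by linarith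
    qed
  qed
  define Mf where "Mf n = max N (SOME M. \<forall>j>M. av (a j) * R ^ j \<le> X n)" for n
  have Mf: "Mf n \<ge> N" "\<forall>j>Mf n. av (a j) * R ^ j \<le> X n" for n
  proof -
    show "Mf n \<ge> N" unfolding Mf_def by simp
    have "\<forall>j>(SOME M. \<forall>j>M. av (a j) * R ^ j \<le> X n). av (a j) * R ^ j \<le> X n"
      using someI_ex[OF exM[of n]] .
    then show "\<forall>j>Mf n. av (a j) * R ^ j \<le> X n" unfolding Mf_def by simp
  qed
  define spec where "spec t n t' \<longleftrightarrow> av t' \<le> R \<and> av (t' - t) ^ N * av (a N) \<le> av (ps_eval av a t)
      \<and> av (ps_eval av a t') \<le> X n" for t n t'
  define nxt where "nxt t n = (SOME t'. spec t n t')" for t n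
  have nxt: "spec t n (nxt t n)" if "av t \<le> R" for t n
  proof -
    have "\<exists>t'. spec t n t'" unfolding spec_def
      by (rule exist_step[OF R w N that Mf(1)]) (use Xpos[of n] Mf(2)[of n] in auto)
    then show ?thesis unfolding nxt_def by (rule someI_ex)
  qed
  define ts where "ts = rec_nat 0 (\<lambda>n t. nxt t n)"
  have ts0: "ts 0 = 0" and tsS: "ts (Suc n) = nxt (ts n) n" for n unfolding ts_def by simp_all
  have inR: "av (ts n) \<le> R" for n
  proof (induction n)
    case 0 then show ?case using ts0 R by simp
  next
    case (Suc n) then show ?case using nxt[OF Suc] tsS unfolding spec_def by simp
  qed
  have sp: "spec (ts n) n (ts (Suc n))" for n using nxt[OF inR[of n]] tsS by simp
  have stepsmall: "av (ts (Suc (Suc n)) - ts (Suc n)) \<le> 1 / real (Suc n)" for n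
  proof -
    have "av (ts (Suc (Suc n)) - ts (Suc n)) ^ N * av (a N) \<le> av (ps_eval av a (ts (Suc n)))"
      using sp[of "Suc n"] unfolding spec_def by simp
    also have "\<dots> \<le> X n" using sp[of n] unfolding spec_def by simp
    finally have "av (ts (Suc (Suc n)) - ts (Suc n)) ^ N \<le> (1 / real (Suc n)) ^ N"
      unfolding X_def using aNp by (simp add: mult.commute)
    then have "av (ts (Suc (Suc n)) - ts (Suc n)) ^ Suc j \<le> (1 / real (Suc n)) ^ Suc j"
      unfolding j .
    then show ?thesis by (rule power_le_imp_le_base) simp
  qed
  have cauchy: "\<forall>e>0. \<exists>K. \<forall>m\<ge>K. \<forall>n\<ge>K. av (ts m - ts n) < e"
  proof (intro allI impI)
    fix e :: real assume e: "e > 0"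
    obtain n0 where n0: "inverse (real (Suc n0)) < e" using reals_Archimedean[OF e] by blast
    have "\<forall>i\<ge>Suc n0. av (ts (Suc i) - ts i) < e"
    proof (intro allI impI)
      fix i assume i: "i \<ge> Suc n0"
      then obtain i' where i': "i = Suc i'" "i' \<ge> n0" by (cases i) auto
      have "av (ts (Suc i) - ts i) \<le> 1 / real (Suc i')" using stepsmall[of i'] i' by simp
      also have "\<dots> \<le> 1 / real (Suc n0)" using i' by (intro divide_left_mono) auto
      also have "\<dots> < e" using n0 by (simp add: inverse_eq_divide)
      finally show "av (ts (Suc i) - ts i) < e" .
    qed
    then show "\<exists>K. \<forall>m\<ge>K. \<forall>n\<ge>K. av (ts m - ts n) < e"
      using ultra_cauchy[OF e] by blast
  qed
  obtain z where z: "(\<lambda>n. av (ts n - z)) \<longlonglongrightarrow> 0" using av_complete[OF cauchy] by blast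
  have zR: "av z \<le> R"
  proof (rule ccontr)
    assume c: "\<not> av z \<le> R"
    then have "av z > 0" using R by simp
    then obtain n where n: "\<bar>av (ts n - z)\<bar> < av z" using z unfolding real_zero_iff by blast
    have "z = (z - ts n) + ts n" by simp
    then have "av z \<le> max (av (z - ts n)) (av (ts n))" by (metis av_ultra)
    moreover have "av (z - ts n) < av z" using n by (simp add: av_minus_commute)
    moreover have "av (ts n) < av z" using inR[of n] c by simp
    ultimately show False by linarith
  qed
  have "ps_eval av a z = 0"
  proof (rule ccontr)
    assume c: "ps_eval av a z \<noteq> 0"
    define v where "v = av (ps_eval av a z)"
    have v: "v > 0" unfolding v_def using c av_pos by simp
    define A where "A = av (a N) * R ^ N"
    have A: "A > 0" unfolding A_def using aNp R by simp
    have Ab: "\<forall>k. av (a k) * R ^ k \<le> A" using w unfolding wd_def A_def by simp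
    obtain n1 where n1: "\<forall>n\<ge>n1. \<bar>av (ts n - z)\<bar> < v * R / A"
      using z v A R unfolding real_zero_iff by (meson divide_pos_pos mult_pos_pos)
    obtain n2 where n2: "inverse (real (Suc n2)) < v / av (a N)"
      using reals_Archimedean[of "v / av (a N)"] v aNp by auto
    define n where "n = max n1 n2"
    have "av (ps_eval av a (ts (Suc n))) \<le> X n" using sp[of n] unfolding spec_def by simp
    also have "\<dots> \<le> av (a N) * (1 / real (Suc n))" by (rule Xle)
    also have "\<dots> \<le> av (a N) * (1 / real (Suc n2))"
      unfolding n_def using aNp by (intro mult_left_mono divide_left_mono) auto
    also have "\<dots> < av (a N) * (v / av (a N))"
      using n2 aNp by (intro mult_strict_left_mono) (auto simp: inverse_eq_divide)
    also have "\<dots> = v" using aNp by (simp del: av_eq0)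
    finally have f1: "av (ps_eval av a (ts (Suc n))) < v" .
    have "av (ps_eval av a (ts (Suc n)) - ps_eval av a z) \<le> A * av (ts (Suc n) - z) / R"
      by (rule ps_lipschitz[OF R a inR zR]) (use A Ab in auto)
    also have "\<dots> < A * (v * R / A) / R"
    proof -
      have "av (ts (Suc n) - z) < v * R / A" using n1 unfolding n_def by fastforce
      then show ?thesis using A R by (intro divide_strict_right_mono mult_strict_left_mono) auto
    qed
    also have "\<dots> = v" using A R by simp
    finally have f2: "av (ps_eval av a (ts (Suc n)) - ps_eval av a z) < v" .
    have "ps_eval av a z = ps_eval av a (ts (Suc n)) - (ps_eval av a (ts (Suc n)) - ps_eval av a z)" by simp
    then have "v \<le> max (av (ps_eval av a (ts (Suc n)))) (av (ps_eval av a (ts (Suc n)) - ps_eval av a z))"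
      unfolding v_def by (metis av_diff)
    then show False using f1 f2 by linarith
  qed
  then show ?thesis using zR by blast
qed

end

context cpf
begin

definition dvT :: "(nat \<Rightarrow> 'a) \<Rightarrow> 'a \<Rightarrow> nat \<Rightarrow> nat \<Rightarrow> 'a" where
  "dvT a c k i = a (i+k) * c ^ i"

definition Bd :: "(nat \<Rightarrow> 'a) \<Rightarrow> 'a \<Rightarrow> nat \<Rightarrow> 'a" where
  "Bd a c k = (SOME L. av_tendsto av (\<lambda>n. \<Sum>i<n. dvT a c k i) L)"

lemma dvT_bound':
  assumes R: "R > 0" and c: "av c \<le> R"
  shows "av (dvT a c k i) \<le> av (a (i+k)) * R ^ (i+k) / R ^ k"
proof -
  have "av (dvT a c k i) = av (a (i+k)) * av c ^ i" unfolding dvT_def by simp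
  also have "\<dots> \<le> av (a (i+k)) * R ^ i" using c by (intro mult_left_mono power_mono) auto
  also have "\<dots> = av (a (i+k)) * R ^ (i+k) / R ^ k" using R by (simp add: power_add)
  finally show ?thesis .
qed

lemma dv_sums:
  assumes R: "R > 0" and a: "conv0 a R" and c: "av c \<le> R"
  shows "av_tendsto av (\<lambda>n. \<Sum>i<n. dvT a c k i) (Bd a c k)"
proof -
  have sh: "(\<lambda>i. av (a (i+k)) * R ^ (i+k)) \<longlonglongrightarrow> 0"
    using a LIMSEQ_ignore_initial_segment[of "\<lambda>k. av (a k) * R ^ k" 0 k] by (simp add: conv0_def)
  have "(\<lambda>i. av (dvT a c k i)) \<longlonglongrightarrow> 0"
  proof (rule real_null_le)
    show "av (dvT a c k i) \<le> av (a (i+k)) * R ^ (i+k) / R ^ k" for i by (rule dvT_bound'[OF R c])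
    show "(\<lambda>i. av (a (i+k)) * R ^ (i+k) / R ^ k) \<longlonglongrightarrow> 0"
      using tendsto_divide_zero[OF sh, of "R^k"] by simp
  qed auto
  then have "\<exists>L. av_tendsto av (\<lambda>n. \<Sum>i<n. dvT a c k i) L" by (rule series_conv)
  then show ?thesis unfolding Bd_def by (rule someI_ex)
qed

lemma dv_bound:
  assumes R: "R > 0" and a: "conv0 a R" and c: "av c \<le> R"
    and X: "0 \<le> X" "\<forall>j\<ge>k. av (a j) * R ^ j \<le> X"
  shows "av (Bd a c k) * R ^ k \<le> X"
proof -
  have "av (Bd a c k - (\<Sum>i<0. dvT a c k i)) \<le> X / R ^ k"
  proof (rule series_tail_le[OF dv_sums[OF R a c]])
    show "0 \<le> X / R ^ k" using X R by simp
    show "\<forall>i\<ge>0. av (dvT a c k i) \<le> X / R ^ k"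
    proof (intro allI impI)
      fix i :: nat
      have "av (dvT a c k i) \<le> av (a (i+k)) * R ^ (i+k) / R ^ k" by (rule dvT_bound'[OF R c])
      also have "\<dots> \<le> X / R ^ k" using X(2) R by (intro divide_right_mono) auto
      finally show "av (dvT a c k i) \<le> X / R ^ k" .
    qed
  qed
  then show ?thesis using R by (simp add: field_simps)
qed

lemma dv_first:
  assumes R: "R > 0" and a: "conv0 a R" and c: "av c \<le> R"
    and Y: "\<forall>j>k. av (a j) * R ^ j < Y"
  shows "av (Bd a c k - a k) * R ^ k < Y"
proof -
  have "av (Bd a c k - (\<Sum>i<1. dvT a c k i)) < Y / R ^ k"
  proof (rule series_tail_less[OF dv_sums[OF R a c]])
    show "\<forall>i\<ge>1. av (dvT a c k i) < Y / R ^ k"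
    proof (intro allI impI)
      fix i :: nat assume i: "i \<ge> 1"
      have "av (dvT a c k i) \<le> av (a (i+k)) * R ^ (i+k) / R ^ k" by (rule dvT_bound'[OF R c])
      also have "\<dots> < Y / R ^ k" using Y i R by (intro divide_strict_right_mono) auto
      finally show "av (dvT a c k i) < Y / R ^ k" .
    qed
  qed
  moreover have "(\<Sum>i<1. dvT a c k i) = a k" by (simp add: dvT_def)
  ultimately show ?thesis using R by (simp add: field_simps)
qed

lemma dv_rec:
  assumes R: "R > 0" and a: "conv0 a R" and c: "av c \<le> R"
  shows "Bd a c k = a k + c * Bd a c (Suc k)"
proof -
  have eq: "(\<Sum>i<Suc n. dvT a c k i) = a k + c * (\<Sum>i<n. dvT a c (Suc k) i)" for n
  proof -
    have "(\<Sum>i<Suc n. dvT a c k i) = dvT a c k 0 + (\<Sum>i<n. dvT a c k (Suc i))"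
      by (rule sum.lessThan_Suc_shift)
    moreover have "dvT a c k (Suc i) = c * dvT a c (Suc k) i" for i
      unfolding dvT_def by simp
    moreover have "dvT a c k 0 = a k" unfolding dvT_def by simp
    ultimately show ?thesis by (simp only: sum_distrib_left)
  qed
  have "av_tendsto av (\<lambda>n. \<Sum>i<Suc n. dvT a c k i) (Bd a c k)"
    by (subst av_tendsto_Suc_iff) (rule dv_sums[OF R a c])
  moreover have "av_tendsto av (\<lambda>n. \<Sum>i<Suc n. dvT a c k i) (a k + c * Bd a c (Suc k))"
    unfolding eq by (intro av_tendsto_add av_tendsto_const av_tendsto_cmult dv_sums[OF R a c])
  ultimately show ?thesis by (rule av_tendsto_unique)
qed

lemma dv_0:
  assumes R: "R > 0" and a: "conv0 a R" and c: "av c \<le> R"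
  shows "Bd a c 0 = ps_eval av a c"
proof -
  have "av_tendsto av (\<lambda>n. \<Sum>i<n. dvT a c 0 i) (ps_eval av a c)"
    using ps_conv[OF R a c] unfolding ps_sums_def dvT_def by simp
  then show ?thesis using dv_sums[OF R a c, of 0] by (rule av_tendsto_unique[rotated])
qed

lemma dv_identity:
  assumes R: "R > 0" and a: "conv0 a R" and c: "av c \<le> R"
  shows "(t - c) * (\<Sum>k<K. Bd a c (Suc k) * t ^ k) = (\<Sum>k<K. a k * t ^ k) + Bd a c K * t ^ K - Bd a c 0"
proof (induction K)
  case 0 then show ?case by simp
next
  case (Suc K)
  have r: "Bd a c K = a K + c * Bd a c (Suc K)" by (rule dv_rec[OF R a c])
  have "(t - c) * (\<Sum>k<Suc K. Bd a c (Suc k) * t ^ k)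
      = (t - c) * (\<Sum>k<K. Bd a c (Suc k) * t ^ k) + (t - c) * (Bd a c (Suc K) * t ^ K)"
    by (simp add: distrib_left)
  also have "\<dots> = (\<Sum>k<K. a k * t ^ k) + Bd a c K * t ^ K - Bd a c 0 + (t - c) * (Bd a c (Suc K) * t ^ K)"
    using Suc by simp
  also have "\<dots> = (\<Sum>k<Suc K. a k * t ^ k) + Bd a c (Suc K) * t ^ Suc K - Bd a c 0"
    unfolding r by (simp add: algebra_simps)
  finally show ?case .
qed

lemma dv_null:
  assumes R: "R > 0" and a: "conv0 a R" and c: "av c \<le> R"
  shows "(\<lambda>k. av (Bd a c k) * R ^ k) \<longlonglongrightarrow> 0"
  unfolding real_zero_iff
proof (intro allI impI)
  fix e :: real assume e: "e > 0"
  obtain M where M: "\<forall>j\<ge>M. \<bar>av (a j) * R ^ j\<bar> < e / 2"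
    using a e unfolding conv0_def real_zero_iff by (meson half_gt_zero)
  show "\<exists>N. \<forall>n\<ge>N. \<bar>av (Bd a c n) * R ^ n\<bar> < e"
  proof (intro exI allI impI)
    fix n assume n: "n \<ge> M"
    have "av (Bd a c n) * R ^ n \<le> e / 2"
    proof (rule dv_bound[OF R a c])
      show "\<forall>j\<ge>n. av (a j) * R ^ j \<le> e / 2"
      proof (intro allI impI)
        fix j assume "j \<ge> n"
        then have "\<bar>av (a j) * R ^ j\<bar> < e / 2" using M n by simp
        then show "av (a j) * R ^ j \<le> e / 2" by linarith
      qed
    qed (use e in simp)
    then show "\<bar>av (Bd a c n) * R ^ n\<bar> < e" using e R by simp
  qed
qed

lemma division:
  assumes R: "R > 0" and w: "wd a R (Suc n)" and z0: "av z0 \<le> R" and f0: "ps_eval av a z0 = 0"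
  shows "wd (\<lambda>k. Bd a z0 (Suc k)) R n \<and>
    (\<forall>t. av t \<le> R \<longrightarrow> ps_eval av a t = (t - z0) * ps_eval av (\<lambda>k. Bd a z0 (Suc k)) t)"
proof -
  have a: "conv0 a R" using w unfolding wd_def by simp
  define g where "g k = Bd a z0 (Suc k)" for k
  define \<alpha>N where "\<alpha>N = av (a (Suc n)) * R ^ Suc n"
  have null: "(\<lambda>k. av (Bd a z0 k) * R ^ k) \<longlonglongrightarrow> 0" by (rule dv_null[OF R a z0])
  have gR: "av (g k) * R ^ k = av (Bd a z0 (Suc k)) * R ^ Suc k / R" for k
    unfolding g_def using R by simp
  have cg: "conv0 g R"
    unfolding conv0_def gR
    using tendsto_divide_zero[OF LIMSEQ_Suc[OF null], of R] by simp
  have "av (Bd a z0 (Suc n) - a (Suc n)) * R ^ Suc n < \<alpha>N"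
    unfolding \<alpha>N_def by (rule dv_first[OF R a z0]) (use w in \<open>auto simp: wd_def\<close>)
  then have "av (Bd a z0 (Suc n) - a (Suc n)) < av (a (Suc n))" unfolding \<alpha>N_def using R by simp
  then have "av ((Bd a z0 (Suc n) - a (Suc n)) + a (Suc n)) = av (a (Suc n))" by (rule av_add_strict)
  then have gn: "av (g n) = av (a (Suc n))" unfolding g_def by simp
  have gnR: "av (g n) * R ^ n = \<alpha>N / R" unfolding gn \<alpha>N_def using R by simp
  have le: "av (g k) * R ^ k \<le> av (g n) * R ^ n" for k
  proof -
    have "av (Bd a z0 (Suc k)) * R ^ Suc k \<le> \<alpha>N"
      by (rule dv_bound[OF R a z0]) (use w R in \<open>auto simp: wd_def \<alpha>N_def\<close>)
    then have "av (Bd a z0 (Suc k)) * R ^ Suc k / R \<le> \<alpha>N / R" using R by (intro divide_right_mono) auto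
    then show ?thesis using gR[of k] gnR by linarith
  qed
  have "\<exists>X'. 0 \<le> X' \<and> X' < \<alpha>N \<and> (\<forall>i\<ge>Suc (Suc n). av (a i) * R ^ i \<le> X')"
  proof (rule sup_below)
    show "(\<lambda>i. av (a i) * R ^ i) \<longlonglongrightarrow> 0" using a unfolding conv0_def .
    show "\<forall>i. 0 \<le> av (a i) * R ^ i" using R by simp
    show "\<forall>i\<ge>Suc (Suc n). av (a i) * R ^ i < \<alpha>N" using w unfolding wd_def \<alpha>N_def by auto
  qed
  then obtain X' where X': "0 \<le> X'" "X' < \<alpha>N" "\<forall>i\<ge>Suc (Suc n). av (a i) * R ^ i \<le> X'" by blast
  have lt: "av (g k) * R ^ k < av (g n) * R ^ n" if k: "k > n" for k
  proof -
    have "av (Bd a z0 (Suc k)) * R ^ Suc k \<le> X'"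
      by (rule dv_bound[OF R a z0 X'(1)]) (use X'(3) k in auto)
    then have "av (Bd a z0 (Suc k)) * R ^ Suc k < \<alpha>N" using X'(2) by linarith
    then have "av (Bd a z0 (Suc k)) * R ^ Suc k / R < \<alpha>N / R" using R by (intro divide_strict_right_mono) auto
    then show ?thesis using gR[of k] gnR by linarith
  qed
  have wg: "wd g R n" unfolding wd_def using cg le lt by blast
  have ident: "ps_eval av a t = (t - z0) * ps_eval av g t" if t: "av t \<le> R" for t
  proof -
    have P: "av_tendsto av (\<lambda>K. (t - z0) * (\<Sum>k<K. g k * t ^ k)) ((t - z0) * ps_eval av g t)"
      using ps_conv[OF R cg t] unfolding ps_sums_def by (rule av_tendsto_cmult)
    have A: "av_tendsto av (\<lambda>K. \<Sum>k<K. a k * t ^ k) (ps_eval av a t)"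
      using ps_conv[OF R a t] unfolding ps_sums_def .
    have eq: "(t - z0) * (\<Sum>k<K. g k * t ^ k) - (\<Sum>k<K. a k * t ^ k) = Bd a z0 K * t ^ K" for K
      using dv_identity[OF R a z0, of t K] dv_0[OF R a z0] f0 unfolding g_def by simp
    have "(\<lambda>K. av ((t - z0) * (\<Sum>k<K. g k * t ^ k) - (\<Sum>k<K. a k * t ^ k))) \<longlonglongrightarrow> 0"
      unfolding eq
    proof (rule real_null_le[OF _ _ null])
      show "av (Bd a z0 K * t ^ K) \<le> av (Bd a z0 K) * R ^ K" for K
        using t by (simp add: mult_left_mono power_mono)
    qed simp
    then have "av_tendsto av (\<lambda>K. (t - z0) * (\<Sum>k<K. g k * t ^ k)) (ps_eval av a t)"
      by (rule av_tendsto_close[OF A])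
    then show ?thesis using P by (rule av_tendsto_unique)
  qed
  show ?thesis using wg ident unfolding g_def by blast
qed

end

context cpf
begin

definition ordz :: "('a \<Rightarrow> 'a) \<Rightarrow> 'a \<Rightarrow> nat \<Rightarrow> bool" where
  "ordz f z0 k \<longleftrightarrow> (\<exists>b :: nat \<Rightarrow> 'a. \<exists>d>0. (\<forall>z. av (z - z0) < d \<longrightarrow> ps_sums av b (z - z0) (f z)) \<and>
        (\<forall>i<k. b i = 0) \<and> b k \<noteq> 0)"

lemma zero_mult_iff: "zero_mult av f z0 k \<longleftrightarrow> f z0 = 0 \<and> ordz f z0 k"
  unfolding zero_mult_def ordz_def by simp

lemma ordz_pos: assumes "ordz F z k" "F z = 0" shows "k \<ge> 1"
proof (rule ccontr)
  assume "\<not> k \<ge> 1"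
  then have k: "k = 0" by simp
  obtain b d where bd: "d > 0" "\<forall>u. av (u - z) < d \<longrightarrow> ps_sums av b (u - z) (F u)" "b k \<noteq> 0"
    using assms(1) unfolding ordz_def by blast
  have "ps_sums av b 0 (F z)" using bd(2)[rule_format, of z] bd(1) by simp
  then have "F z = b 0" by (rule ps_sums_at0)
  then show False using assms(2) bd(3) k by simp
qed

lemma ordz_nonzero:
  assumes R: "R > 0" and a: "conv0 a R" and z: "av z \<le> R"
    and F: "\<forall>u. av u \<le> R \<longrightarrow> F u = ps_eval av a u" and Fz: "F z \<noteq> 0"
  shows "ordz F z 0"
  unfolding ordz_def
proof (intro exI[of _ "rc a z"] exI[of _ R] conjI allI impI)
  show "R > 0" by (rule R)
  fix u assume u: "av (u - z) < R"
  have uR: "av u \<le> R" using av_add_le[OF z, of "u - z"] u by simp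
  have "ps_sums av (rc a z) (u - z) (ps_eval av a (z + (u - z)))"
    by (rule rc_ps[OF R a z]) (use u in simp)
  then show "ps_sums av (rc a z) (u - z) (F u)" using F uR by simp
next
  show "rc a z 0 \<noteq> 0" using rc_0[OF R a z] F z Fz by simp
qed simp

lemma ordz_mult:
  assumes R: "R > 0" and G: "ordz G z k" and F: "\<forall>u. av u \<le> R \<longrightarrow> F u = (u - z0) * G u"
    and z: "av z \<le> R"
  shows "ordz F z (if z = z0 then Suc k else k)"
proof -
  obtain b d where d: "d > 0" and bs: "\<forall>u. av (u - z) < d \<longrightarrow> ps_sums av b (u - z) (G u)"
    and b0: "\<forall>i<k. b i = 0" and bk: "b k \<noteq> 0"
    using G unfolding ordz_def by blast
  define \<gamma> where "\<gamma> i = (z - z0) * b i + (case i of 0 \<Rightarrow> 0 | Suc j \<Rightarrow> b j)" for i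
  define d' where "d' = min d R"
  have d': "d' > 0" unfolding d'_def using d R by simp
  have conv: "ps_sums av \<gamma> (u - z) (F u)" if u: "av (u - z) < d'" for u
  proof -
    define s where "s = u - z"
    have uR: "av u \<le> R" using av_add_le[OF z, of "u - z"] u unfolding d'_def by simp
    have Gs: "av_tendsto av (\<lambda>n. \<Sum>i<n. b i * s ^ i) (G u)"
      using bs u unfolding d'_def s_def ps_sums_def by simp
    have eq: "(\<Sum>i<Suc m. \<gamma> i * s ^ i) = (z - z0) * (\<Sum>i<Suc m. b i * s ^ i) + s * (\<Sum>i<m. b i * s ^ i)" for m
    proof -
      have "(\<Sum>i<Suc m. \<gamma> i * s ^ i) = (\<Sum>i<Suc m. (z - z0) * (b i * s ^ i)) +
          (\<Sum>i<Suc m. (case i of 0 \<Rightarrow> 0 | Suc j \<Rightarrow> b j) * s ^ i)"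
        unfolding \<gamma>_def by (simp add: sum.distrib distrib_right mult.assoc)
      moreover have "(\<Sum>i<Suc m. (case i of 0 \<Rightarrow> 0 | Suc j \<Rightarrow> b j) * s ^ i) = s * (\<Sum>i<m. b i * s ^ i)"
        unfolding sum.lessThan_Suc_shift by (simp add: sum_distrib_left mult_ac)
      ultimately show ?thesis by (simp only: sum_distrib_left)
    qed
    have "av_tendsto av (\<lambda>m. \<Sum>i<Suc m. b i * s ^ i) (G u)"
      by (subst av_tendsto_Suc_iff) (rule Gs)
    then have "av_tendsto av (\<lambda>m. (z - z0) * (\<Sum>i<Suc m. b i * s ^ i) + s * (\<Sum>i<m. b i * s ^ i))
        ((z - z0) * G u + s * G u)"
      by (intro av_tendsto_add av_tendsto_cmult Gs)
    moreover have "(z - z0) * G u + s * G u = F u" using F uR unfolding s_def by (simp add: algebra_simps)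
    ultimately have "av_tendsto av (\<lambda>m. \<Sum>i<Suc m. \<gamma> i * s ^ i) (F u)" unfolding eq by simp
    then show ?thesis unfolding ps_sums_def s_def by (subst (asm) av_tendsto_Suc_iff)
  qed
  show ?thesis
  proof (cases "z = z0")
    case True
    have "\<forall>i<Suc k. \<gamma> i = 0" unfolding \<gamma>_def True using b0 by (auto split: nat.splits)
    moreover have "\<gamma> (Suc k) \<noteq> 0" unfolding \<gamma>_def True using bk by simp
    ultimately show ?thesis unfolding ordz_def using True conv d' by auto
  next
    case False
    have "\<forall>i<k. \<gamma> i = 0" unfolding \<gamma>_def using b0 by (auto split: nat.splits)
    moreover have "\<gamma> k \<noteq> 0" unfolding \<gamma>_def using bk b0 False by (auto split: nat.splits)
    ultimately show ?thesis unfolding ordz_def using False conv d' by auto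
  qed
qed

end

context cpf
begin

lemma wd0_nonzero:
  assumes R: "R > 0" and w: "wd a R 0" and u: "av u \<le> R"
  shows "ps_eval av a u \<noteq> 0"
proof
  assume h: "ps_eval av a u = 0"
  have a: "conv0 a R" using w unfolding wd_def by simp
  have "av (ps_eval av a u - (\<Sum>i<1. a i * u ^ i)) < av (a 0)"
  proof (rule series_tail_less[OF ps_conv[OF R a u, unfolded ps_sums_def]])
    show "\<forall>i\<ge>1. av (a i * u ^ i) < av (a 0)"
    proof (intro allI impI)
      fix i :: nat assume i: "i \<ge> 1"
      have "av (a i * u ^ i) \<le> av (a i) * R ^ i" using u by (simp add: mult_left_mono power_mono)
      also have "\<dots> < av (a 0)" using w i unfolding wd_def by simp
      finally show "av (a i * u ^ i) < av (a 0)" .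
    qed
  qed
  then show False using h by simp
qed

theorem W:
  assumes "R > 0" "wd a R N" "\<forall>u. av u \<le> R \<longrightarrow> F u = ps_eval av a u"
  shows "finite {z. av z \<le> R \<and> F z = 0} \<and>
    (\<exists>m. (\<forall>z. av z \<le> R \<and> F z = 0 \<longrightarrow> ordz F z (m z)) \<and> (\<Sum>z\<in>{z. av z \<le> R \<and> F z = 0}. m z) = N)"
  using assms
proof (induction N arbitrary: a F)
  case 0
  have e: "{z. av z \<le> R \<and> F z = 0} = {}" using wd0_nonzero[OF 0(1,2)] 0(3) by auto
  have "\<forall>z. av z \<le> R \<and> F z = 0 \<longrightarrow> ordz F z 0" using e by blast
  then show ?case unfolding e by (intro conjI exI[of _ "\<lambda>z. 0"]) auto
next
  case (Suc n)
  note R = Suc(2) and w = Suc(3) and FF = Suc(4)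
  obtain z0 where z0: "av z0 \<le> R" "ps_eval av a z0 = 0" using exists_zero[OF R w] by auto
  define g where "g k = Bd a z0 (Suc k)" for k
  have div: "wd g R n" "\<forall>t. av t \<le> R \<longrightarrow> ps_eval av a t = (t - z0) * ps_eval av g t"
    using division[OF R w z0] unfolding g_def by auto
  define G where "G = ps_eval av g"
  have cg: "conv0 g R" using div(1) unfolding wd_def by simp
  from Suc(1)[OF R div(1), of G] obtain mg where
    fin: "finite {z. av z \<le> R \<and> G z = 0}" and
    mg: "\<forall>z. av z \<le> R \<and> G z = 0 \<longrightarrow> ordz G z (mg z)" and
    sg: "(\<Sum>z\<in>{z. av z \<le> R \<and> G z = 0}. mg z) = n"
    unfolding G_def by auto
  define Zg where "Zg = {z. av z \<le> R \<and> G z = 0}"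
  have FG: "\<forall>u. av u \<le> R \<longrightarrow> F u = (u - z0) * G u" using FF div(2) unfolding G_def by simp
  have ZF: "{z. av z \<le> R \<and> F z = 0} = insert z0 Zg"
    unfolding Zg_def using FG z0(1) by auto
  define m where "m = mg(z0 := (if G z0 = 0 then mg z0 else 0) + 1)"
  have ordF: "\<forall>z. av z \<le> R \<and> F z = 0 \<longrightarrow> ordz F z (m z)"
  proof (intro allI impI)
    fix z assume z: "av z \<le> R \<and> F z = 0"
    show "ordz F z (m z)"
    proof (cases "z = z0")
      case True
      show ?thesis
      proof (cases "G z0 = 0")
        case True2: True
        have "ordz G z0 (mg z0)" using mg z0(1) True2 by blast
        from ordz_mult[OF R this FG z0(1)] show ?thesis using True True2 unfolding m_def by simp
      next
        case False2: False
        have "ordz G z0 0" by (rule ordz_nonzero[OF R cg z0(1)]) (use False2 in \<open>auto simp: G_def\<close>)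
        from ordz_mult[OF R this FG z0(1)] show ?thesis using True False2 unfolding m_def by simp
      qed
    next
      case False
      have "(z - z0) * G z = 0" using FG[rule_format, of z] z by simp
      then have "G z = 0" using False by simp
      then have "ordz G z (mg z)" using mg z by blast
      from ordz_mult[OF R this FG] show ?thesis using False z unfolding m_def by simp
    qed
  qed
  have finZ: "finite Zg" using fin unfolding Zg_def .
  have "(\<Sum>z\<in>insert z0 Zg. m z) = m z0 + (\<Sum>z\<in>Zg - {z0}. m z)"
    by (rule sum.insert_remove[OF finZ])
  also have "(\<Sum>z\<in>Zg - {z0}. m z) = (\<Sum>z\<in>Zg - {z0}. mg z)"
    unfolding m_def by (rule sum.cong) auto
  also have "m z0 + (\<Sum>z\<in>Zg - {z0}. mg z) = Suc n"
  proof (cases "z0 \<in> Zg")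
    case True
    have "(\<Sum>z\<in>Zg. mg z) = mg z0 + (\<Sum>z\<in>Zg - {z0}. mg z)" by (rule sum.remove[OF finZ True])
    moreover have "G z0 = 0" using True unfolding Zg_def by simp
    ultimately show ?thesis using sg unfolding m_def Zg_def by simp
  next
    case False
    then have "Zg - {z0} = Zg" by simp
    moreover have "G z0 \<noteq> 0" using False z0(1) unfolding Zg_def by simp
    ultimately show ?thesis using sg unfolding m_def Zg_def by simp
  qed
  finally show ?case using ordF ZF finZ by auto
qed

end

context cpf
begin

lemma ps_sums_add: "ps_sums av a z L \<Longrightarrow> ps_sums av b z M \<Longrightarrow> ps_sums av (\<lambda>k. a k + b k) z (L + M)"
  unfolding ps_sums_def by (drule (1) av_tendsto_add) (simp add: sum.distrib distrib_right)

lemma ps_sums_const: "ps_sums av (\<lambda>k. if k = 0 then c else 0) z c"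
proof -
  have "\<forall>n\<ge>1. (\<Sum>i<n. (if i = 0 then c else 0) * z ^ i) = c"
  proof (intro allI impI)
    fix n :: nat assume "n \<ge> 1"
    then have "(\<Sum>i<n. (if i = 0 then c else 0) * z ^ i) = (\<Sum>i\<in>{0}. (if i = 0 then c else 0) * z ^ i)"
      by (intro sum.mono_neutral_right) auto
    then show "(\<Sum>i<n. (if i = 0 then c else 0) * z ^ i) = c" by simp
  qed
  then show ?thesis unfolding ps_sums_def by (rule av_tendsto_eventually[OF av_tendsto_const])
qed

lemma ps_sums_finite:
  assumes "\<forall>k\<ge>K. a k = 0"
  shows "ps_sums av a z (\<Sum>k<K. a k * z ^ k)"
proof -
  have "\<forall>n\<ge>K. (\<Sum>i<n. a i * z ^ i) = (\<Sum>k<K. a k * z ^ k)"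
  proof (intro allI impI)
    fix n assume "n \<ge> K"
    then show "(\<Sum>i<n. a i * z ^ i) = (\<Sum>k<K. a k * z ^ k)"
      using assms by (intro sum.mono_neutral_right) auto
  qed
  then show ?thesis unfolding ps_sums_def by (rule av_tendsto_eventually[OF av_tendsto_const])
qed

lemma rc_null:
  assumes R: "R > 0" and a: "conv0 a R" and c: "av c \<le> R"
  shows "(\<lambda>k. av (rc a c k) * R ^ k) \<longlonglongrightarrow> 0"
  unfolding real_zero_iff
proof (intro allI impI)
  fix e :: real assume e: "e > 0"
  obtain M where M: "\<forall>j\<ge>M. \<bar>av (a j) * R ^ j\<bar> < e / 2"
    using a e unfolding conv0_def real_zero_iff by (meson half_gt_zero)
  show "\<exists>N. \<forall>n\<ge>N. \<bar>av (rc a c n) * R ^ n\<bar> < e"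
  proof (intro exI allI impI)
    fix n assume n: "n \<ge> M"
    have "av (rc a c n) * R ^ n \<le> e / 2"
    proof (rule rc_bound[OF R a c])
      show "\<forall>j\<ge>n. av (a j) * R ^ j \<le> e / 2"
      proof (intro allI impI)
        fix j assume "j \<ge> n"
        then have "\<bar>av (a j) * R ^ j\<bar> < e / 2" using M n by simp
        then show "av (a j) * R ^ j \<le> e / 2" by linarith
      qed
    qed (use e in simp)
    then show "\<bar>av (rc a c n) * R ^ n\<bar> < e" using e R by simp
  qed
qed

lemma conv0_add:
  assumes "conv0 a R" "conv0 b R" and R: "R \<ge> 0"
  shows "conv0 (\<lambda>k. a k + b k) R"
  unfolding conv0_def
proof (rule real_null_le)
  show "av (a k + b k) * R ^ k \<le> av (a k) * R ^ k + av (b k) * R ^ k" for k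
  proof -
    have "max (av (a k)) (av (b k)) \<le> av (a k) + av (b k)" by (simp add: max_def)
    then have "av (a k + b k) \<le> av (a k) + av (b k)" using av_ultra[of "a k" "b k"] by linarith
    then have "av (a k + b k) * R ^ k \<le> (av (a k) + av (b k)) * R ^ k"
      using R by (intro mult_right_mono) auto
    then show ?thesis by (simp add: distrib_right)
  qed
  show "(\<lambda>k. av (a k) * R ^ k + av (b k) * R ^ k) \<longlonglongrightarrow> 0"
    using tendsto_add[OF assms(1,2)[unfolded conv0_def]] by simp
qed (use R in simp)

lemma conv0_finite:
  assumes "\<forall>k\<ge>K. a k = 0" shows "conv0 a R"
  unfolding conv0_def real_zero_iff
proof (intro allI impI)
  fix e :: real assume "e > 0"
  then show "\<exists>N. \<forall>n\<ge>N. \<bar>av (a n) * R ^ n\<bar> < e" using assms by (intro exI[of _ K]) auto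
qed

end

locale qsetup = cpf +
  fixes r :: real and q :: "nat \<Rightarrow> 'a" and lam :: 'a
  assumes r_val: "\<exists>c. c \<noteq> 0 \<and> av c = r" and r_gt: "r > 1"
    and q_HB: "in_HB av r q"
    and q_small: "HB_norm av r q < real p powr (- 1 / (real p - 1))"
    and lam: "av (lam - 1) < 1"
begin

lemma r_pos: "r > 0" using r_gt by simp

definition H where "H = HB_norm av r q"

lemma rho_le1: "real p powr (- 1 / (real p - 1)) \<le> 1"
proof -
  have "real p powr (- 1 / (real p - 1)) \<le> real p powr 0"
    using p_ge2 by (intro powr_mono) (auto simp: divide_nonpos_pos)
  then show ?thesis using p_ge2 by simp
qed

lemma H_lt1: "H < 1" using q_small rho_le1 unfolding H_def by linarith

lemma q_conv0: "conv0 q r"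
proof -
  obtain c where c: "c \<noteq> 0" "av c = r" using r_val by blast
  obtain L where "ps_sums av q c L" using q_HB c unfolding in_HB_def by auto
  then have "(\<lambda>n. av (q n * c ^ n)) \<longlonglongrightarrow> 0" unfolding ps_sums_def by (rule terms_to_zero)
  then show ?thesis unfolding conv0_def using c by simp
qed

lemma q_bound: "av (q k) * r ^ k \<le> H"
proof -
  have "convergent (\<lambda>k. av (q k) * r ^ k)" using q_conv0 unfolding conv0_def convergent_def by blast
  then have "bdd_above (range (\<lambda>k. av (q k) * r ^ k))" by (intro Bseq_bdd_above convergent_imp_Bseq)
  then show ?thesis unfolding H_def HB_norm_def by (intro cSUP_upper) auto
qed

lemma H_nonneg: "0 \<le> H" using q_bound[of 0] by (smt (verit) av_nonneg mult_nonneg_nonneg r_pos zero_le_power)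

lemma av_lam: "av lam = 1"
proof -
  have "av ((lam - 1) + 1) = av 1" using lam by (intro av_add_strict) simp
  then show ?thesis by simp
qed

lemma p_ne0: "(of_nat p :: 'a) \<noteq> 0" using p_ge2 by simp

lemma av_lamp: "av (lam / of_nat p) = real p" using av_lam av_p p_ge2 by simp

lemma av_1mlamp: "av (1 - lam / of_nat p) = real p"
proof -
  have "av (1 + (- (lam / of_nat p))) = av (- (lam / of_nat p))"
    using av_lamp p_ge2 by (intro av_add_strict) simp
  then show ?thesis using av_lamp by simp
qed

definition pc :: "'a \<Rightarrow> nat \<Rightarrow> 'a" where
  "pc c k = lam / of_nat p * of_nat (p choose k) * c ^ (p - k)
          + (1 - lam / of_nat p) * of_nat ((p + 1) choose k) * c ^ (p + 1 - k)"

lemma pc_zero: "k \<ge> p + 2 \<Longrightarrow> pc c k = 0"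
  unfolding pc_def by (simp add: binomial_eq_0)

lemma P_expand: "P_lam p lam (c + z) = (\<Sum>k<p+2. pc c k * z ^ k)"
proof -
  have b1: "(c + z) ^ p = (\<Sum>k<p+2. of_nat (p choose k) * z ^ k * c ^ (p - k))"
  proof -
    have "(c + z) ^ p = (\<Sum>k\<le>p. of_nat (p choose k) * z ^ k * c ^ (p - k))"
      using binomial_ring[of z c p] by (simp add: add.commute)
    also have "\<dots> = (\<Sum>k<p+2. of_nat (p choose k) * z ^ k * c ^ (p - k))"
      by (rule sum.mono_neutral_left) auto
    finally show ?thesis .
  qed
  have b2: "(c + z) ^ (p + 1) = (\<Sum>k<p+2. of_nat ((p+1) choose k) * z ^ k * c ^ (p + 1 - k))"
  proof -
    have "(c + z) ^ (p + 1) = (\<Sum>k\<le>p+1. of_nat ((p+1) choose k) * z ^ k * c ^ (p + 1 - k))"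
      using binomial_ring[of z c "p+1"] by (simp add: add.commute)
    also have "\<dots> = (\<Sum>k<p+2. of_nat ((p+1) choose k) * z ^ k * c ^ (p + 1 - k))"
      by (rule sum.cong) auto
    finally show ?thesis .
  qed
  show ?thesis unfolding P_lam_def b1 b2 sum_distrib_left sum.distrib[symmetric]
    by (rule sum.cong[OF refl]) (simp add: pc_def algebra_simps)
qed

lemma pc_sums: "ps_sums av (pc c) z (P_lam p lam (c + z))"
  unfolding P_expand by (rule ps_sums_finite) (simp add: pc_zero)

lemma pc_bound: "av c \<le> 1 \<Longrightarrow> av (pc c k) \<le> real p"
proof -
  assume c: "av c \<le> 1"
  have t1: "av (lam / of_nat p * of_nat (p choose k) * c ^ (p - k)) \<le> real p"
  proof -
    have "av (lam / of_nat p * of_nat (p choose k) * c ^ (p - k))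
        = real p * av (of_nat (p choose k) :: 'a) * av c ^ (p - k)" unfolding av_mult av_power av_lamp ..
    also have "\<dots> \<le> real p * 1 * 1"
      using c av_of_nat_le1 by (intro mult_mono) (auto simp: power_le_one)
    finally show ?thesis by simp
  qed
  have t2: "av ((1 - lam / of_nat p) * of_nat ((p + 1) choose k) * c ^ (p + 1 - k)) \<le> real p"
  proof -
    have "av ((1 - lam / of_nat p) * of_nat ((p + 1) choose k) * c ^ (p + 1 - k))
        = real p * av (of_nat ((p + 1) choose k) :: 'a) * av c ^ (p + 1 - k)" unfolding av_mult av_power av_1mlamp ..
    also have "\<dots> \<le> real p * 1 * 1"
      using c av_of_nat_le1 by (intro mult_mono) (auto simp: power_le_one)
    finally show ?thesis by simp
  qed
  show ?thesis unfolding pc_def by (rule av_add_le[OF t1 t2])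
qed

lemma pc_top: "pc c (p + 1) = 1 - lam / of_nat p"
  unfolding pc_def by simp

lemma pc_11: "pc 1 1 = of_nat p + 1 - lam / of_nat p"
proof -
  have "pc 1 1 = lam / of_nat p * of_nat p + (1 - lam / of_nat p) * (of_nat p + 1)"
    unfolding pc_def by simp
  also have "\<dots> = of_nat p + 1 - lam / of_nat p" using p_ne0 by (simp add: field_simps)
  finally show ?thesis .
qed

definition E :: "'a \<Rightarrow> nat \<Rightarrow> 'a" where "E c k = pc c k + rc q c k"

lemma E_sums:
  assumes c: "av c \<le> r" and z: "av z \<le> r"
  shows "ps_sums av (E c) z (P_lam p lam (c + z) + ps_eval av q (c + z))"
  unfolding E_def by (rule ps_sums_add[OF pc_sums rc_ps[OF r_pos q_conv0 c z]])

lemma rcq_bound: "av c \<le> r \<Longrightarrow> av (rc q c k) * r ^ k \<le> H"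
  by (rule rc_bound[OF r_pos q_conv0]) (auto simp: H_nonneg q_bound)

lemma rcq_lt1: "av c \<le> r \<Longrightarrow> av (rc q c k) < 1"
proof -
  assume c: "av c \<le> r"
  have "av (rc q c k) * 1 \<le> av (rc q c k) * r ^ k"
    using r_gt by (intro mult_left_mono) (auto simp: one_le_power)
  then show ?thesis using rcq_bound[OF c, of k] H_lt1 by linarith
qed

lemma E_conv0: "av c \<le> r \<Longrightarrow> conv0 (E c) r"
  unfolding E_def
  by (rule conv0_add[OF conv0_finite[of "p+2"]]) (auto simp: pc_zero conv0_def rc_null[OF r_pos q_conv0] less_imp_le[OF r_pos])

lemma E_bound: "av c \<le> 1 \<Longrightarrow> av (E c k) \<le> real p"
proof -
  assume c: "av c \<le> 1"
  have cr: "av c \<le> r" using c r_gt by simp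
  have "av (rc q c k) \<le> real p" using rcq_lt1[OF cr, of k] p_ge2 by simp
  then show ?thesis unfolding E_def using pc_bound[OF c] by (rule av_add_le[rotated])
qed

lemma E_top: "av c \<le> 1 \<Longrightarrow> av (E c (p + 1)) = real p"
proof -
  assume c: "av c \<le> 1"
  have cr: "av c \<le> r" using c r_gt by simp
  have "av (rc q c (p+1)) < av (1 - lam / of_nat p)"
    using rcq_lt1[OF cr, of "p+1"] av_1mlamp p_ge2 by simp
  then have "av (rc q c (p+1) + (1 - lam / of_nat p)) = real p" using av_1mlamp by (simp add: av_add_strict)
  then show ?thesis unfolding E_def pc_top by (simp add: add.commute)
qed

lemma E_high: "k \<ge> p + 2 \<Longrightarrow> E c k = rc q c k"
  unfolding E_def by (simp add: pc_zero)

end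

context qsetup
begin

lemma ps_sums_lin: "ps_sums av (\<lambda>k. if k = 1 then c else 0) z (c * z)"
proof -
  have "ps_sums av (\<lambda>k. if k = 1 then c else 0) z (\<Sum>k<2. (if k = 1 then c else 0) * z ^ k)"
    by (rule ps_sums_finite) auto
  moreover have "(\<Sum>k<2. (if k = 1 then c else (0::'a)) * z ^ k) = c * z"
    by (simp add: numeral_2_eq_2)
  ultimately show ?thesis by simp
qed

definition GG :: "'a \<Rightarrow> 'a" where
  "GG u = P_lam p lam (1 + u) + ps_eval av q (1 + u) - (1 + u)"

definition gg :: "nat \<Rightarrow> 'a" where
  "gg k = (E 1 k + (if k = 0 then - 1 else 0)) + (if k = 1 then - 1 else 0)"

lemma gg_sums: "av u \<le> r \<Longrightarrow> ps_sums av gg u (GG u)"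
proof -
  assume u: "av u \<le> r"
  have "ps_sums av gg u ((P_lam p lam (1 + u) + ps_eval av q (1 + u) + (- 1)) + (- 1) * u)"
    unfolding gg_def
    by (intro ps_sums_add E_sums ps_sums_const ps_sums_lin) (use u r_gt in auto)
  then show ?thesis unfolding GG_def by (simp add: algebra_simps)
qed

lemma P1: "P_lam p lam 1 = 1" unfolding P_lam_def by simp

lemma gg0: "gg 0 = ps_eval av q 1"
proof -
  have "ps_sums av gg 0 (GG 0)" using gg_sums r_gt by simp
  then have "GG 0 = gg 0" by (rule ps_sums_at0)
  then show ?thesis unfolding GG_def using P1 by simp
qed

lemma gg1: "av (gg 1) = real p"
proof -
  have e: "gg 1 = (of_nat p + (- (lam / of_nat p))) + rc q 1 1"
    unfolding gg_def E_def pc_11 by simp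
  have "av (of_nat p + (- (lam / of_nat p))) = real p"
  proof (rule trans[OF av_add_strict])
    have "1 / real p \<le> 1 / 2" using p_ge2 by (simp add: field_simps)
    moreover have "real p \<ge> 2" using p_ge2 by simp
    ultimately have h: "1 / real p < real p" by linarith
    show "av (of_nat p :: 'a) < av (- (lam / of_nat p))" using av_p av_lamp av_lam h by simp
  qed (use av_lamp in simp)
  moreover have "av (rc q 1 1) < real p" using rcq_lt1[of 1 1] r_gt p_ge2 by simp
  ultimately show ?thesis unfolding e using av_add_strict2 by (metis)
qed

lemma gg_high: "k \<ge> 2 \<Longrightarrow> av (gg k) \<le> real p"
  unfolding gg_def using E_bound[of 1 k] by simp

lemma gg_conv0: "conv0 gg r"
  unfolding gg_def
  by (intro conv0_add conv0_finite[of 2] E_conv0) (use r_gt in auto)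

lemma Q1_bound: "av (ps_eval av q 1) \<le> H"
  by (rule ps_eval_bound[OF r_pos q_conv0]) (use r_gt H_nonneg q_bound in auto)

lemma h_prop: "av (h_fix p av q lam - 1) < 1"
proof (cases "ps_eval av q 1 = 0")
  case True
  have "h_fix p av q lam = 1"
    unfolding h_fix_def
  proof (rule the_equality)
    show "av (1 - 1) \<le> av (ps_eval av q 1) / real p \<and> P_lam p lam 1 + ps_eval av q 1 = 1"
      using True P1 by simp
    fix z assume "av (z - 1) \<le> av (ps_eval av q 1) / real p \<and> P_lam p lam z + ps_eval av q z = z"
    then have "av (z - 1) \<le> 0" using True by simp
    then show "z = 1" using av_nonneg[of "z - 1"] by simp
  qed
  then show ?thesis by simp
next
  case False
  define \<delta> where "\<delta> = av (ps_eval av q 1) / real p"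
  have dpos: "\<delta> > 0" unfolding \<delta>_def using False av_pos p_ge2 by simp
  have d1: "\<delta> < 1" unfolding \<delta>_def using Q1_bound H_lt1 p_ge2 by (simp add: divide_less_eq)
  have dr: "\<delta> \<le> r" using d1 r_gt by simp
  have a1: "av (gg 1) * \<delta> ^ 1 = av (gg 0)" unfolding gg1 gg0 \<delta>_def using p_ge2 by simp
  have wdg: "wd gg \<delta> 1"
    unfolding wd_def
  proof (intro conjI allI impI)
    show "conv0 gg \<delta>" unfolding conv0_def
    proof (rule real_null_le)
      show "av (gg k) * \<delta> ^ k \<le> av (gg k) * r ^ k" for k
        using dr dpos by (intro mult_left_mono power_mono) auto
    qed (use gg_conv0 dpos in \<open>auto simp: conv0_def\<close>)
    fix k :: nat
    show "av (gg k) * \<delta> ^ k \<le> av (gg 1) * \<delta> ^ 1"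
    proof (cases "k \<le> 1")
      case True then show ?thesis using a1 by (cases k) auto
    next
      case False
      have "av (gg k) * \<delta> ^ k \<le> real p * \<delta> ^ k" using gg_high[of k] False dpos by (intro mult_right_mono) auto
      also have "\<dots> \<le> real p * \<delta> ^ 1" using False dpos d1 p_ge2
        by (intro mult_left_mono power_decreasing) auto
      finally show ?thesis using gg1 by simp
    qed
  next
    fix k :: nat assume k: "k > 1"
    have "av (gg k) * \<delta> ^ k \<le> real p * \<delta> ^ k" using gg_high[of k] k dpos by (intro mult_right_mono) auto
    also have "\<dots> < real p * \<delta> ^ 1" using k dpos d1 p_ge2
      by (intro mult_strict_left_mono power_strict_decreasing) auto
    finally show "av (gg k) * \<delta> ^ k < av (gg 1) * \<delta> ^ 1" using gg1 by simp
  qed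
  have FF: "\<forall>u. av u \<le> \<delta> \<longrightarrow> GG u = ps_eval av gg u"
    using gg_sums dr by (auto intro: ps_eval_eq[symmetric])
  obtain m where fin: "finite {u. av u \<le> \<delta> \<and> GG u = 0}"
    and mo: "\<forall>u. av u \<le> \<delta> \<and> GG u = 0 \<longrightarrow> ordz GG u (m u)"
    and ms: "(\<Sum>u\<in>{u. av u \<le> \<delta> \<and> GG u = 0}. m u) = 1"
    using W[OF dpos wdg FF] by blast
  define Z where "Z = {u. av u \<le> \<delta> \<and> GG u = 0}"
  have m1: "m u \<ge> 1" if u: "u \<in> Z" for u
  proof -
    have "av u \<le> \<delta> \<and> GG u = 0" using u unfolding Z_def by simp
    then have "ordz GG u (m u)" "GG u = 0" using mo by auto
    then show ?thesis by (rule ordz_pos)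
  qed
  have ex1: "\<exists>!u. u \<in> Z"
  proof -
    have "Z \<noteq> {}"
    proof
      assume "Z = {}"
      then have e: "{u. av u \<le> \<delta> \<and> GG u = 0} = {}" unfolding Z_def .
      show False using ms unfolding e by simp
    qed
    then obtain u where u: "u \<in> Z" by blast
    moreover have "v = u" if v: "v \<in> Z" for v
    proof (rule ccontr)
      assume vu: "v \<noteq> u"
      have "(\<Sum>x\<in>{u, v}. m x) \<le> (\<Sum>x\<in>Z. m x)"
        using u v fin unfolding Z_def by (intro sum_mono2) auto
      moreover have "(\<Sum>x\<in>{u, v}. m x) = m u + m v" using vu by simp
      ultimately show False using m1[OF u] m1[OF v] ms unfolding Z_def by simp
    qed
    ultimately show ?thesis by blast
  qed
  have eqv: "(av (z - 1) \<le> av (ps_eval av q 1) / real p \<and> P_lam p lam z + ps_eval av q z = z)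
      \<longleftrightarrow> z - 1 \<in> Z" for z
    unfolding Z_def GG_def \<delta>_def by (simp add: algebra_simps)
  have "\<exists>!z. av (z - 1) \<le> av (ps_eval av q 1) / real p \<and> P_lam p lam z + ps_eval av q z = z"
  proof -
    obtain u where u: "u \<in> Z" "\<forall>v. v \<in> Z \<longrightarrow> v = u" using ex1 by blast
    show ?thesis
    proof (rule ex1I[of _ "u + 1"])
      show "av (u + 1 - 1) \<le> av (ps_eval av q 1) / real p \<and> P_lam p lam (u + 1) + ps_eval av q (u + 1) = u + 1"
        using eqv[of "u + 1"] u(1) by simp
      fix z assume "av (z - 1) \<le> av (ps_eval av q 1) / real p \<and> P_lam p lam z + ps_eval av q z = z"
      then have "z - 1 \<in> Z" using eqv[of z] by blast
      then have "z - 1 = u" using u(2) by blast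
      then show "z = u + 1" by (simp add: algebra_simps)
    qed
  qed
  then have "av (h_fix p av q lam - 1) \<le> \<delta>" unfolding h_fix_def \<delta>_def by (rule theI'[THEN conjunct1])
  then show ?thesis using d1 by simp
qed

end

context qsetup
begin

definition s0 where "s0 = h_fix p av q lam - 1"

lemma s0_small: "av s0 \<le> 1" using h_prop unfolding s0_def by simp
lemma s0_r: "av s0 \<le> r" using s0_small r_gt by simp

definition ee :: "nat \<Rightarrow> 'a" where "ee k = E s0 k + (if k = 0 then - s0 else 0)"

lemma ee_sums: "av z \<le> r \<Longrightarrow> ps_sums av ee z (Q_lam p av q lam z)"
proof -
  assume z: "av z \<le> r"
  have "ps_sums av ee z ((P_lam p lam (s0 + z) + ps_eval av q (s0 + z)) + - s0)"
    unfolding ee_def by (intro ps_sums_add E_sums ps_sums_const s0_r z)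
  moreover have e: "z + h_fix p av q lam - 1 = s0 + z" unfolding s0_def by simp
  moreover have ring: "A + 1 - hh = A + - (hh - 1)" for A hh :: 'a by simp
  moreover have "Q_lam p av q lam z = (P_lam p lam (s0 + z) + ps_eval av q (s0 + z)) + - s0"
    unfolding Q_lam_def Let_def e s0_def ring ..
  ultimately show ?thesis by simp
qed

definition c0 where "c0 = ee 0"
definition R0 where "R0 = real p * r ^ (p + 1)"

lemma ee_conv0: "conv0 ee r"
  unfolding ee_def
  by (intro conv0_add conv0_finite[of 1] E_conv0 s0_r) (use r_gt in auto)

lemma ee_top: "av (ee (p + 1)) * r ^ (p + 1) = R0"
  unfolding ee_def R0_def using E_top[OF s0_small] by simp

lemma r_pow_ge: "r ^ k \<ge> 1" using r_gt by (simp add: one_le_power)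

lemma R0_gt1: "R0 > 1"
proof -
  have "1 \<le> r ^ (p + 1)" by (rule r_pow_ge)
  then have a: "real p * 1 \<le> real p * r ^ (p + 1)" by (intro mult_left_mono) auto
  have b: "real p \<ge> 2" using p_ge2 by simp
  show ?thesis unfolding R0_def using a b by linarith
qed

lemma R0_gtp: "R0 > real p"
proof -
  have "r ^ (p + 1) > 1" using r_gt by (intro one_less_power) auto
  then have "real p * 1 < real p * r ^ (p + 1)" using p_ge2 by (intro mult_strict_left_mono) auto
  then show ?thesis unfolding R0_def by simp
qed

lemma R0_gtr: "R0 > r"
proof -
  have "r ^ 1 \<le> r ^ (p + 1)" using r_gt by (intro power_increasing) auto
  then have "2 * r \<le> real p * r ^ (p + 1)" using p_ge2 r_gt by (intro mult_mono) auto
  then show ?thesis unfolding R0_def using r_gt by simp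
qed

lemma ee_le: "k \<ge> 1 \<Longrightarrow> av (ee k) * r ^ k \<le> R0"
proof -
  assume k: "k \<ge> 1"
  show ?thesis
  proof (cases "k \<le> p + 1")
    case True
    have "av (ee k) * r ^ k \<le> real p * r ^ (p + 1)"
    proof (rule mult_mono)
      show "av (ee k) \<le> real p" unfolding ee_def using k E_bound[OF s0_small] by simp
      show "r ^ k \<le> r ^ (p + 1)" using True r_gt by (intro power_increasing) auto
    qed (use r_gt in auto)
    then show ?thesis unfolding R0_def .
  next
    case False
    then have "ee k = rc q s0 k" unfolding ee_def using E_high[of k] by simp
    then have "av (ee k) * r ^ k \<le> H" using rcq_bound[OF s0_r] by simp
    then show ?thesis using H_lt1 R0_gt1 by simp
  qed
qed

lemma ee_lt: "k > p + 1 \<Longrightarrow> av (ee k) * r ^ k < R0"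
proof -
  assume k: "k > p + 1"
  then have "ee k = rc q s0 k" unfolding ee_def using E_high[of k] by simp
  then have "av (ee k) * r ^ k \<le> H" using rcq_bound[OF s0_r] by simp
  then show ?thesis using H_lt1 R0_gt1 by simp
qed

lemma c0_small: "av c0 \<le> real p"
  unfolding c0_def ee_def using E_bound[OF s0_small, of 0] s0_small p_ge2
  by (intro av_add_le) auto

lemma Q0: "Q_lam p av q lam 0 = c0"
  using ps_sums_at0[OF ee_sums[of 0]] r_gt unfolding c0_def by simp

lemma image_sub: "av z \<le> r \<Longrightarrow> av (Q_lam p av q lam z - c0) \<le> R0"
proof -
  assume z: "av z \<le> r"
  have "av (Q_lam p av q lam z - (\<Sum>i<1. ee i * z ^ i)) \<le> R0"
  proof (rule series_tail_le[OF ee_sums[OF z, unfolded ps_sums_def]])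
    show "0 \<le> R0" using R0_gt1 by simp
    show "\<forall>i\<ge>1. av (ee i * z ^ i) \<le> R0"
    proof (intro allI impI)
      fix i :: nat assume i: "i \<ge> 1"
      have "av (ee i) * av z ^ i \<le> av (ee i) * r ^ i" using z by (intro mult_left_mono power_mono) auto
      then show "av (ee i * z ^ i) \<le> R0" using ee_le[OF i] by simp
    qed
  qed
  then show ?thesis unfolding c0_def by simp
qed

definition ew :: "'a \<Rightarrow> nat \<Rightarrow> 'a" where "ew w k = ee k + (if k = 0 then - w else 0)"

lemma ew_props:
  assumes w: "av (w - c0) \<le> R0"
  shows "finite {z. av z \<le> r \<and> Q_lam p av q lam z - w = 0} \<and>
    (\<exists>m. (\<forall>z. av z \<le> r \<and> Q_lam p av q lam z - w = 0 \<longrightarrow> ordz (\<lambda>u. Q_lam p av q lam u - w) z (m z)) \<and>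
      (\<Sum>z\<in>{z. av z \<le> r \<and> Q_lam p av q lam z - w = 0}. m z) = p + 1)"
proof (rule W[OF r_pos])
  show "wd (ew w) r (p + 1)"
    unfolding wd_def
  proof (intro conjI allI impI)
    show "conv0 (ew w) r" unfolding ew_def
      by (intro conv0_add ee_conv0 conv0_finite[of 1]) (use r_gt in auto)
    have top: "av (ew w (p + 1)) * r ^ (p + 1) = R0" unfolding ew_def using ee_top by simp
    fix k :: nat
    have "av (ew w k) * r ^ k \<le> R0"
    proof (cases "k = 0")
      case True
      then show ?thesis unfolding ew_def using w by (simp add: av_minus_commute c0_def)
    next
      case False
      then show ?thesis unfolding ew_def using ee_le[of k] by simp
    qed
    then show "av (ew w k) * r ^ k \<le> av (ew w (p + 1)) * r ^ (p + 1)" using top by linarith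
  next
    fix k :: nat assume k: "k > p + 1"
    have top: "av (ew w (p + 1)) * r ^ (p + 1) = R0" unfolding ew_def using ee_top by simp
    have "av (ew w k) * r ^ k < R0" unfolding ew_def using ee_lt[OF k] k by simp
    then show "av (ew w k) * r ^ k < av (ew w (p + 1)) * r ^ (p + 1)" using top by linarith
  qed
  show "\<forall>u. av u \<le> r \<longrightarrow> Q_lam p av q lam u - w = ps_eval av (ew w) u"
  proof (intro allI impI)
    fix u assume u: "av u \<le> r"
    have "ps_sums av (ew w) u (Q_lam p av q lam u + - w)"
      unfolding ew_def by (intro ps_sums_add ee_sums u ps_sums_const)
    then show "Q_lam p av q lam u - w = ps_eval av (ew w) u" using ps_eval_eq by simp
  qed
qed

end

context qsetup
begin

lemma setZ: "{z \<in> Bdisk av 0 r. Q_lam p av q lam z = w} = {z. av z \<le> r \<and> Q_lam p av q lam z - w = 0}"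
  unfolding Bdisk_def by auto

lemma img_eq: "Q_lam p av q lam ` Bdisk av 0 r = Bdisk av c0 R0"
proof
  show "Q_lam p av q lam ` Bdisk av 0 r \<subseteq> Bdisk av c0 R0"
    using image_sub unfolding Bdisk_def by auto
  show "Bdisk av c0 R0 \<subseteq> Q_lam p av q lam ` Bdisk av 0 r"
  proof
    fix w assume "w \<in> Bdisk av c0 R0"
    then have w: "av (w - c0) \<le> R0" unfolding Bdisk_def by simp
    obtain m where s: "(\<Sum>z\<in>{z. av z \<le> r \<and> Q_lam p av q lam z - w = 0}. m z) = p + 1"
      using ew_props[OF w] by blast
    have "{z. av z \<le> r \<and> Q_lam p av q lam z - w = 0} \<noteq> {}"
    proof
      assume e: "{z. av z \<le> r \<and> Q_lam p av q lam z - w = 0} = {}"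
      show False using s unfolding e by simp
    qed
    then obtain z where z: "av z \<le> r" "Q_lam p av q lam z - w = 0" by blast
    then have "z \<in> Bdisk av 0 r" "w = Q_lam p av q lam z" unfolding Bdisk_def by auto
    then show "w \<in> Q_lam p av q lam ` Bdisk av 0 r" by blast
  qed
qed

lemma B_sub: "Bdisk av 0 r \<subset> Bdisk av c0 R0"
proof
  show "Bdisk av 0 r \<subseteq> Bdisk av c0 R0"
  proof
    fix z assume "z \<in> Bdisk av 0 r"
    then have z: "av z \<le> r" unfolding Bdisk_def by simp
    have "av (z - c0) \<le> R0" using z R0_gtr c0_small R0_gtp by (intro av_diff_le) auto
    then show "z \<in> Bdisk av c0 R0" unfolding Bdisk_def by simp
  qed
  obtain cc where cc: "cc \<noteq> 0" "av cc = r" using r_val by blast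
  define d where "d = cc ^ (p + 1) / of_nat p"
  have ad: "av d = R0" unfolding d_def R0_def using cc av_p p_ge2 by simp
  define y where "y = c0 + d"
  have "av (y - c0) = R0" unfolding y_def using ad by simp
  then have yin: "y \<in> Bdisk av c0 R0" unfolding Bdisk_def by simp
  have "av c0 < av d" using ad c0_small R0_gtp by simp
  then have "av y = R0" unfolding y_def using ad by (simp add: av_add_strict)
  then have "y \<notin> Bdisk av 0 r" using R0_gtr unfolding Bdisk_def by simp
  then show "Bdisk av 0 r \<noteq> Bdisk av c0 R0" using yin by blast
qed

lemma main:
  "(\<exists>c R. Q_lam p av q lam ` Bdisk av 0 r = Bdisk av c R) \<and>
         Bdisk av 0 r \<subset> Q_lam p av q lam ` Bdisk av 0 r \<and>
         (\<forall>w \<in> Q_lam p av q lam ` Bdisk av 0 r.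
            finite {z \<in> Bdisk av 0 r. Q_lam p av q lam z = w} \<and>
            (\<exists>m :: 'a \<Rightarrow> nat.
               (\<forall>z \<in> Bdisk av 0 r. Q_lam p av q lam z = w \<longrightarrow>
                   zero_mult av (\<lambda>u. Q_lam p av q lam u - w) z (m z)) \<and>
               (\<Sum>z \<in> {z \<in> Bdisk av 0 r. Q_lam p av q lam z = w}. m z) = p + 1))"
proof (intro conjI ballI)
  show "\<exists>c R. Q_lam p av q lam ` Bdisk av 0 r = Bdisk av c R" using img_eq by blast
  show "Bdisk av 0 r \<subset> Q_lam p av q lam ` Bdisk av 0 r" unfolding img_eq by (rule B_sub)
  fix w assume "w \<in> Q_lam p av q lam ` Bdisk av 0 r"
  then have "w \<in> Bdisk av c0 R0" by (simp only: img_eq)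
  then have w: "av (w - c0) \<le> R0" unfolding Bdisk_def by simp
  note E = ew_props[OF w]
  show "finite {z \<in> Bdisk av 0 r. Q_lam p av q lam z = w}" unfolding setZ using E by blast
  obtain m where m1: "\<forall>z. av z \<le> r \<and> Q_lam p av q lam z - w = 0 \<longrightarrow> ordz (\<lambda>u. Q_lam p av q lam u - w) z (m z)"
    and m2: "(\<Sum>z\<in>{z. av z \<le> r \<and> Q_lam p av q lam z - w = 0}. m z) = p + 1"
    using E by blast
  show "\<exists>m :: 'a \<Rightarrow> nat.
               (\<forall>z \<in> Bdisk av 0 r. Q_lam p av q lam z = w \<longrightarrow>
                   zero_mult av (\<lambda>u. Q_lam p av q lam u - w) z (m z)) \<and>
               (\<Sum>z \<in> {z \<in> Bdisk av 0 r. Q_lam p av q lam z = w}. m z) = p + 1"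
  proof (intro exI[of _ m] conjI ballI impI)
    fix z assume z: "z \<in> Bdisk av 0 r" "Q_lam p av q lam z = w"
    then have "av z \<le> r \<and> Q_lam p av q lam z - w = 0" unfolding Bdisk_def by simp
    then show "zero_mult av (\<lambda>u. Q_lam p av q lam u - w) z (m z)"
      unfolding zero_mult_iff using m1 by simp
  next
    show "(\<Sum>z \<in> {z \<in> Bdisk av 0 r. Q_lam p av q lam z = w}. m z) = p + 1" unfolding setZ by (rule m2)
  qed
qed

end

theorem proposition3p6:
  fixes p :: nat and av :: "'a::field_char_0 \<Rightarrow> real"
    and r :: real and q :: "nat \<Rightarrow> 'a" and lam :: 'a
  assumes Cp: "is_Cp p av"
    and r_val: "\<exists>c. c \<noteq> 0 \<and> av c = r" and r_gt: "r > 1"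
    and q_HB: "in_HB av r q"
    and q_small: "HB_norm av r q < real p powr (- 1 / (real p - 1))"
    and lam: "av (lam - 1) < 1"
  shows "(\<exists>c R. Q_lam p av q lam ` Bdisk av 0 r = Bdisk av c R) \<and>
         Bdisk av 0 r \<subset> Q_lam p av q lam ` Bdisk av 0 r \<and>
         (\<forall>w \<in> Q_lam p av q lam ` Bdisk av 0 r.
            finite {z \<in> Bdisk av 0 r. Q_lam p av q lam z = w} \<and>
            (\<exists>m :: 'a \<Rightarrow> nat.
               (\<forall>z \<in> Bdisk av 0 r. Q_lam p av q lam z = w \<longrightarrow>
                   zero_mult av (\<lambda>u. Q_lam p av q lam u - w) z (m z)) \<and>
               (\<Sum>z \<in> {z \<in> Bdisk av 0 r. Q_lam p av q lam z = w}. m z) = p + 1))"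
proof -
  interpret qsetup p av r q lam
    by (rule qsetup.intro[OF cpf.intro[OF Cp] qsetup_axioms.intro[OF r_val r_gt q_HB q_small lam]])
  show ?thesis by (rule main)
qed


end
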